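(* Let $\boldsymbol x\in L^2(\Omega,\mathbb R^m)$ and let $\boldsymbol v_1,\ldots,\boldsymbol v_p\in L^2(\Omega,\mathbb R^n)$ be pairwise orthogonal, i.e. $\mathbb E_{v_iv_j}=\mathbb O$ for $i\neq j$ (e.g. obtained by Lemma 3; the matrices $\mathbb E_{v_kv_k}$ need not be invertible). Let $\eta_1,\ldots,\eta_p$ be nonnegative integers with $\eta_1+\cdots+\eta_p\le\min\{m,n\}$. For each $k$ let $$\mathbb E_{xv_k}(\mathbb E_{v_kv_k}^{1/2})^\dagger=\sum_{j=1}^{r_k}\beta_{kj}s_{kj}d_{kj}^T$$ be a singular value decomposition with $\beta_{k1}\ge\cdots\ge\beta_{kr_k}>0$ ($\beta_{kj}:=0$ for $j>r_k$), and let $G_{k\eta_k}=\sum_{j=1}^{\eta_k}\beta_{kj}s_{kj}d_{kj}^T$. Set $$F_k^0=G_{k\eta_k}(\mathbb E_{v_kv_k}^{1/2})^\dagger+A_k\big[I-\mathbb E_{v_kv_k}^{1/2}(\mathbb E_{v_kv_k}^{1/2})^\dagger\big],\qquad f^0=E[\boldsymbol x]-\sum_{k=1}^pF_k^0E[\boldsymbol v_k],$$ where $A_k\in\mathbb R^{m\times n}$ is any matrix such that $\operatorname{rank}F_k^0\le\eta_k$ (e.g. $A_k=\mathbb O$). Then $(f^0,F_1^0,\ldots,F_p^0)$ minimizes $J(f,F_1,\ldots,F_p)=E\big[\|\boldsymbol x-f-\sum_{k=1}^pF_k\boldsymbol v_k\|^2\big]$ over all $f\in\mathbb R^m$ and $F_k\in\mathbb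 R^{m\times n}$ with $\operatorname{rank}F_k\le\eta_k$, and $$E\Big[\big\|\boldsymbol x-f^0-\textstyle\sum_{k=1}^pF_k^0\boldsymbol v_k\big\|^2\Big]=\|\mathbb E_{xx}^{1/2}\|^2-\sum_{k=1}^p\sum_{j=1}^{\eta_k}\beta_{kj}^2 .$$
   Context: $(\Omega,\Sigma,\mu)$ is a probability space, $E[\cdot]$ denotes expectation. For random vectors $\boldsymbol g,\boldsymbol h$, $\mathbb E_{gh}:=E[\boldsymbol g\boldsymbol h^T]-E[\boldsymbol g]E[\boldsymbol h]^T$. $M^\dagger$ is the Moore–Penrose pseudo-inverse; $M^{1/2}$ is the symmetric positive semidefinite square root of a symmetric PSD matrix $M$. For vectors $\|\cdot\|$ is the Euclidean norm, for matrices the Frobenius norm, so $\|\mathbb E_{xx}^{1/2}\|^2=\operatorname{tr}\mathbb E_{xx}$. Matrices act on random vectors pointwise in $\omega$. *)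

theory Defs
  imports "HOL-Analysis.Analysis" "HOL-Probability.Probability"
begin

definition L2_rv :: "'w measure \<Rightarrow> ('w \<Rightarrow> real^'a) \<Rightarrow> bool" where
  "L2_rv M X \<longleftrightarrow> X \<in> borel_measurable M \<and> integrable M (\<lambda>w. (norm (X w))\<^sup>2)"

definition mean :: "'w measure \<Rightarrow> ('w \<Rightarrow> real^'a) \<Rightarrow> real^'a" where
  "mean M X = (\<chi> i. integral\<^sup>L M (\<lambda>w. X w $ i))"

definition cov :: "'w measure \<Rightarrow> ('w \<Rightarrow> real^'a) \<Rightarrow> ('w \<Rightarrow> real^'b) \<Rightarrow> real^'b^'a" where
  "cov M g h = (\<chi> i j. integral\<^sup>L M (\<lambda>w. g w $ i * h w $ j) - mean M g $ i * mean M h $ j)"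

definition outer :: "real^'a \<Rightarrow> real^'b \<Rightarrow> real^'b^'a" where
  "outer s d = (\<chi> i j. s $ i * d $ j)"

definition is_pinv :: "real^'n^'m \<Rightarrow> real^'m^'n \<Rightarrow> bool" where
  "is_pinv A B \<longleftrightarrow> A ** B ** A = A \<and> B ** A ** B = B \<and>
     transpose (A ** B) = A ** B \<and> transpose (B ** A) = B ** A"

definition pinv :: "real^'n^'m \<Rightarrow> real^'m^'n" where
  "pinv A = (THE B. is_pinv A B)"

definition psd :: "real^'n^'n \<Rightarrow> bool" where
  "psd S \<longleftrightarrow> transpose S = S \<and> (\<forall>x. 0 \<le> x \<bullet> (S *v x))"

definition sqrtm :: "real^'n^'n \<Rightarrow> real^'n^'n" where
  "sqrtm S = (THE R. psd R \<and> R ** R = S)"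

definition frob_sq :: "real^'n^'m \<Rightarrow> real" where
  "frob_sq A = (\<Sum>i\<in>UNIV. \<Sum>j\<in>UNIV. (A $ i $ j)\<^sup>2)"

end

theory Submission
  imports Defs
begin


lemma sym_inner:
  fixes A :: "real^'n^'n"
  assumes "transpose A = A"
  shows "x \<bullet> (A *v y) = (A *v x) \<bullet> y"
proof -
  have "x v* A = A *v x"
    by (metis assms transpose_matrix_vector)
  then show ?thesis by (metis dot_lmul_matrix)
qed

lemma quad_zero:
  fixes a b :: real
  assumes "\<And>t. 2*a*t + b*t\<^sup>2 \<le> 0"
  shows "a = 0"
proof (rule ccontr)
  assume "a \<noteq> 0"
  define t where "t = a / (\<bar>b\<bar> + 1)"
  have tp: "t * a > 0" using \<open>a \<noteq> 0\<close> unfolding t_def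
    by (simp add: zero_less_mult_iff divide_pos_pos) (smt (verit) divide_neg_pos divide_pos_pos mult_neg_neg mult_pos_pos)
  have "\<bar>b * t\<bar> \<le> \<bar>a\<bar>"
  proof -
    have "\<bar>b * t\<bar> = \<bar>b\<bar> * \<bar>a\<bar> / (\<bar>b\<bar> + 1)" unfolding t_def by (simp add: abs_mult)
    also have "\<dots> \<le> \<bar>a\<bar>"
      by (subst pos_divide_le_eq) (auto simp: algebra_simps)
    finally show ?thesis .
  qed
  have "2*a*t + b*t\<^sup>2 = t * (2*a + b*t)" by (simp add: power2_eq_square algebra_simps)
  moreover have "t * (2*a + b*t) > 0"
  proof (cases "a > 0")
    case True
    then have "t > 0" unfolding t_def by simp
    moreover have "2*a + b*t > 0" using \<open>\<bar>b * t\<bar> \<le> \<bar>a\<bar>\<close> True by linarith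
    ultimately show ?thesis by simp
  next
    case False
    then have "a < 0" using \<open>a \<noteq> 0\<close> by simp
    then have "t < 0" unfolding t_def by (simp add: divide_neg_pos add_pos_nonneg)
    moreover have "2*a + b*t < 0" using \<open>\<bar>b * t\<bar> \<le> \<bar>a\<bar>\<close> \<open>a < 0\<close> by linarith
    ultimately show ?thesis by (simp add: mult_neg_neg)
  qed
  ultimately show False using assms[of t] by linarith
qed

lemma spectral_sub:
  fixes A :: "real^'n^'n"
  assumes symA: "transpose A = A"
  shows "subspace S \<Longrightarrow> (\<forall>x\<in>S. A *v x \<in> S) \<Longrightarrow>
    \<exists>B. B \<subseteq> S \<and> pairwise orthogonal B \<and> (\<forall>u\<in>B. norm u = 1) \<and> span B = S \<and>
        (\<forall>u\<in>B. A *v u = (u \<bullet> (A *v u)) *\<^sub>R u)"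
proof (induction "dim S" arbitrary: S rule: less_induct)
  case (less S)
  show ?case
  proof (cases "S = {0}")
    case True
    then show ?thesis by (intro exI[of _ "{}"]) auto
  next
    case False
    then obtain x0 where x0: "x0 \<in> S" "x0 \<noteq> 0" using less.prems(1) subspace_0 by blast
    define T where "T = S \<inter> sphere 0 1"
    have "compact T" unfolding T_def
      by (intro closed_Int_compact closed_subspace less.prems(1) compact_sphere)
    have "x0 /\<^sub>R norm x0 \<in> T" unfolding T_def using x0 less.prems(1)
      by (simp add: subspace_scale)
    then have "T \<noteq> {}" by auto
    have "continuous_on T (\<lambda>x. x \<bullet> (A *v x))"
      by (intro continuous_intros)
    then obtain u where uT: "u \<in> T" and umax: "\<And>y. y \<in> T \<Longrightarrow> y \<bullet> (A *v y) \<le> u \<bullet> (A *v u)"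
      using continuous_attains_sup[OF \<open>compact T\<close> \<open>T \<noteq> {}\<close>] by blast
    define lam where "lam = u \<bullet> (A *v u)"
    have uS: "u \<in> S" and un: "norm u = 1" using uT unfolding T_def by auto
    have uu: "u \<bullet> u = 1" using un by (simp add: norm_eq_1)
    have qle: "z \<bullet> (A *v z) \<le> lam * (z \<bullet> z)" if "z \<in> S" for z
    proof (cases "z = 0")
      case True then show ?thesis by simp
    next
      case False
      have "z /\<^sub>R norm z \<in> T" unfolding T_def using that False less.prems(1)
        by (simp add: subspace_scale)
      then have "(z /\<^sub>R norm z) \<bullet> (A *v (z /\<^sub>R norm z)) \<le> lam" using umax lam_def by blast
      moreover have "(z /\<^sub>R norm z) \<bullet> (A *v (z /\<^sub>R norm z)) = (z \<bullet> (A *v z)) / (z \<bullet> z)"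
        using False by (simp add: matrix_vector_mult_scaleR power2_norm_eq_inner[symmetric] power2_eq_square field_simps)
      ultimately show ?thesis using False
        by (simp add: divide_le_eq)
    qed
    have orth0: "y \<bullet> (A *v u - lam *\<^sub>R u) = 0" if yS: "y \<in> S" for y
    proof -
      have "2 * (y \<bullet> (A *v u) - lam * (u \<bullet> y)) * t + (y \<bullet> (A *v y) - lam * (y \<bullet> y)) * t\<^sup>2 \<le> 0" for t
      proof -
        have "u + t *\<^sub>R y \<in> S" using uS yS less.prems(1) by (simp add: subspace_add subspace_scale)
        from qle[OF this]
        have e1: "(u + t *\<^sub>R y) \<bullet> (A *v (u + t *\<^sub>R y)) \<le> lam * ((u + t *\<^sub>R y) \<bullet> (u + t *\<^sub>R y))" .
        have e2: "(u + t *\<^sub>R y) \<bullet> (A *v (u + t *\<^sub>R y)) =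
            lam + 2 * t * (y \<bullet> (A *v u)) + t\<^sup>2 * (y \<bullet> (A *v y))"
          using sym_inner[OF symA, of u y]
          by (simp add: matrix_vector_right_distrib matrix_vector_mult_scaleR inner_add_left inner_add_right
               lam_def power2_eq_square algebra_simps inner_commute)
        have e3: "(u + t *\<^sub>R y) \<bullet> (u + t *\<^sub>R y) = 1 + 2 * t * (u \<bullet> y) + t\<^sup>2 * (y \<bullet> y)"
          using uu by (simp add: inner_add_left inner_add_right inner_commute power2_eq_square algebra_simps)
        show ?thesis using e1 unfolding e2 e3 by (simp add: algebra_simps power2_eq_square)
      qed
      then have "y \<bullet> (A *v u) - lam * (u \<bullet> y) = 0" by (rule quad_zero)
      then show ?thesis by (simp add: inner_diff_right inner_commute)
    qed
    have "A *v u - lam *\<^sub>R u \<in> S"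
      using less.prems uS by (simp add: subspace_diff subspace_scale)
    from orth0[OF this] have eig: "A *v u = lam *\<^sub>R u" by simp
    define S' where "S' = S \<inter> {y. orthogonal u y}"
    have subS': "subspace S'" unfolding S'_def
      using subspace_inter[OF less.prems(1) subspace_orthogonal_to_vector[of u]] by simp
    have invS': "\<forall>x\<in>S'. A *v x \<in> S'"
    proof
      fix x assume "x \<in> S'"
      then have "x \<in> S" "u \<bullet> x = 0" unfolding S'_def orthogonal_def by auto
      moreover have "u \<bullet> (A *v x) = (A *v u) \<bullet> x" using sym_inner[OF symA] .
      ultimately show "A *v x \<in> S'" unfolding S'_def orthogonal_def using less.prems(2) eig by auto
    qed
    have "S' \<subset> S" using uS uu unfolding S'_def orthogonal_def by (metis (mono_tags, lifting) Int_iff inf_le1 mem_Collect_eq psubsetI zero_neq_one)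
    then have "dim S' < dim S"
      using dim_psubset by (metis less.prems(1) span_eq_iff subS')
    from less.hyps[OF this subS' invS'] obtain B' where B':
      "B' \<subseteq> S'" "pairwise orthogonal B'" "\<forall>u\<in>B'. norm u = 1" "span B' = S'"
      "\<forall>u\<in>B'. A *v u = (u \<bullet> (A *v u)) *\<^sub>R u" by blast
    define B where "B = insert u B'"
    have "u \<notin> B'" using B'(1) uu unfolding S'_def orthogonal_def by auto
    have "B \<subseteq> S" using B'(1) uS unfolding B_def S'_def by auto
    moreover have "pairwise orthogonal B" unfolding B_def
      using B'(1,2) \<open>u \<notin> B'\<close> unfolding S'_def
      by (auto simp: pairwise_insert orthogonal_commute)
    moreover have "\<forall>u\<in>B. norm u = 1" using B'(3) un unfolding B_def by auto
    moreover have "span B = S"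
    proof
      show "span B \<subseteq> S" using \<open>B \<subseteq> S\<close> less.prems(1) by (simp add: span_minimal)
      show "S \<subseteq> span B"
      proof
        fix x assume xS: "x \<in> S"
        have "x - (u \<bullet> x) *\<^sub>R u \<in> S'" unfolding S'_def orthogonal_def
          using xS uS uu less.prems(1) by (simp add: subspace_diff subspace_scale inner_diff_right)
        then have "x - (u \<bullet> x) *\<^sub>R u \<in> span B" using B'(4) unfolding B_def
          by (metis span_mono subset_insertI subsetD)
        moreover have "(u \<bullet> x) *\<^sub>R u \<in> span B" unfolding B_def by (simp add: span_base span_scale)
        ultimately have "x - (u \<bullet> x) *\<^sub>R u + (u \<bullet> x) *\<^sub>R u \<in> span B" by (rule span_add)
        then show "x \<in> span B" by simp
      qed
    qed
    moreover have "\<forall>v\<in>B. A *v v = (v \<bullet> (A *v v)) *\<^sub>R v"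
      using B'(5) eig unfolding B_def lam_def by auto
    ultimately show ?thesis by blast
  qed
qed

lemma sum_mulv: "(\<Sum>i\<in>I. f i) *v (x::real^'n) = (\<Sum>i\<in>I. f i *v x)"
  for f :: "'i \<Rightarrow> real^'n^'m"
  by (induction I rule: infinite_finite_induct) (auto simp: matrix_vector_mult_add_rdistrib)

lemma scaleR_mulv: "(c *\<^sub>R A) *v (x::real^'n) = c *\<^sub>R (A *v x)"
  for A :: "real^'n^'m"
  by (simp add: vec_eq_iff matrix_vector_mult_def sum_distrib_left mult.assoc)

lemma transpose_add: "transpose (A + B) = transpose A + transpose (B :: real^'n^'m)"
  by (simp add: vec_eq_iff transpose_def)

lemma transpose_diff: "transpose (A - B) = transpose A - transpose (B :: real^'n^'m)"
  by (simp add: vec_eq_iff transpose_def)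

lemma transpose_scaleR: "transpose (c *\<^sub>R A) = c *\<^sub>R transpose (A :: real^'n^'m)"
  by (simp add: vec_eq_iff transpose_def)

lemma transpose_sum: "transpose (\<Sum>i\<in>I. f i) = (\<Sum>i\<in>I. transpose (f i :: real^'n^'m))"
  by (induction I rule: infinite_finite_induct) (auto simp: transpose_add vec_eq_iff transpose_def)

lemma outer_mulv: "outer s d *v y = (d \<bullet> y) *\<^sub>R s"
  by (simp add: vec_eq_iff outer_def matrix_vector_mult_def inner_vec_def sum_distrib_left mult.commute mult.left_commute)

lemma transpose_outer: "transpose (outer s d) = outer d s"
  by (simp add: vec_eq_iff outer_def transpose_def)

definition onb :: "(real^'n) set \<Rightarrow> bool" where
  "onb B \<longleftrightarrow> finite B \<and> pairwise orthogonal B \<and> (\<forall>u\<in>B. norm u = 1) \<and> span B = UNIV"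

lemma onb_inner: "onb B \<Longrightarrow> u \<in> B \<Longrightarrow> v \<in> B \<Longrightarrow> u \<bullet> v = (if u = v then 1 else 0)"
  unfolding onb_def pairwise_def orthogonal_def by (auto simp: norm_eq_1)

lemma onb_expand: "onb B \<Longrightarrow> (\<Sum>u\<in>B. (x \<bullet> u) *\<^sub>R u) = x"
  unfolding onb_def by (intro orthonormal_basis_expand) auto

lemma onb_mat_eq:
  fixes M N :: "real^'n^'m"
  assumes "onb B" "\<And>u. u \<in> B \<Longrightarrow> M *v u = N *v u"
  shows "M = N"
proof -
  have "M *v x = N *v x" for x
    using real_vector.linear_eq_on_span[OF matrix_vector_mul_linear matrix_vector_mul_linear, of B M N x] assms
    unfolding onb_def by auto
  then show ?thesis by (simp add: matrix_eq)
qed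

definition diagm :: "(real^'n) set \<Rightarrow> (real^'n \<Rightarrow> real) \<Rightarrow> real^'n^'n" where
  "diagm B c = (\<Sum>u\<in>B. c u *\<^sub>R outer u u)"

lemma diagm_mulv: "diagm B c *v x = (\<Sum>u\<in>B. (c u * (u \<bullet> x)) *\<^sub>R u)"
  unfolding diagm_def by (simp add: sum_mulv scaleR_mulv outer_mulv)

lemma diagm_basis:
  assumes "onb B" "v \<in> B"
  shows "diagm B c *v v = c v *\<^sub>R v"
proof -
  have "diagm B c *v v = (\<Sum>u\<in>B. (if u = v then c u *\<^sub>R u else 0))"
    unfolding diagm_mulv using onb_inner[OF assms(1) _ assms(2)] by (intro sum.cong) auto
  also have "\<dots> = c v *\<^sub>R v" using assms unfolding onb_def by (simp add: if_distrib[symmetric] sum.delta' cong: if_cong)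
  finally show ?thesis .
qed

lemma diagm_sym: "transpose (diagm B c) = diagm B c"
  unfolding diagm_def by (simp add: transpose_sum transpose_scaleR transpose_outer)

lemma diagm_quad: "x \<bullet> (diagm B c *v x) = (\<Sum>u\<in>B. c u * (u \<bullet> x)\<^sup>2)"
  unfolding diagm_mulv by (simp add: inner_sum_right power2_eq_square inner_commute mult.assoc)

lemma spectral:
  fixes A :: "real^'n^'n"
  assumes "transpose A = A"
  obtains B where "onb B" "\<And>u. u \<in> B \<Longrightarrow> A *v u = (u \<bullet> (A *v u)) *\<^sub>R u"
proof -
  obtain B where B: "pairwise orthogonal B" "\<forall>u\<in>B. norm u = 1" "span B = UNIV"
      "\<forall>u\<in>B. A *v u = (u \<bullet> (A *v u)) *\<^sub>R u"
    using spectral_sub[OF assms, of UNIV] by auto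
  have "independent B" using B(1,2) by (intro pairwise_orthogonal_independent) auto
  then have "finite B" by (rule independent_imp_finite)
  with B show ?thesis using that unfolding onb_def by auto
qed

lemma sym_diagm:
  fixes A :: "real^'n^'n"
  assumes "onb B" "\<And>u. u \<in> B \<Longrightarrow> A *v u = c u *\<^sub>R u"
  shows "A = diagm B c"
  using assms by (intro onb_mat_eq[OF assms(1)]) (simp add: diagm_basis)

lemma psd_sym: "psd S \<Longrightarrow> transpose S = S" unfolding psd_def by auto

lemma sqrt_unique_basis:
  fixes R S :: "real^'n^'n"
  assumes R: "psd R" "R ** R = S" and eig: "S *v u = l *\<^sub>R u" and l: "l \<ge> 0"
  shows "R *v u = sqrt l *\<^sub>R u"
proof (cases "l = 0")
  case True
  have "(R *v u) \<bullet> (R *v u) = u \<bullet> (R *v (R *v u))"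
    using sym_inner[OF psd_sym[OF R(1)], of u "R *v u"] by simp
  also have "\<dots> = 0" using eig True R(2) by (simp add: matrix_vector_mul_assoc)
  finally show ?thesis using True by simp
next
  case False
  then have lp: "l > 0" using l by simp
  define w where "w = R *v u - sqrt l *\<^sub>R u"
  have "R *v w + sqrt l *\<^sub>R w = (R ** R) *v u - l *\<^sub>R u"
    unfolding w_def using l
    by (simp add: matrix_vector_mult_diff_distrib matrix_vector_mult_scaleR matrix_vector_mul_assoc algebra_simps)
  also have "\<dots> = 0" using R(2) eig by simp
  finally have w0: "R *v w + sqrt l *\<^sub>R w = 0" .
  have "w \<bullet> (R *v w) + sqrt l * (w \<bullet> w) = 0"
    using arg_cong[OF w0, of "\<lambda>z. w \<bullet> z"] by (simp add: inner_add_right)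
  moreover have "w \<bullet> (R *v w) \<ge> 0" using R(1) unfolding psd_def by auto
  moreover have "w \<bullet> w \<ge> 0" by simp
  moreover have "sqrt l * (w \<bullet> w) \<ge> 0" using l by simp
  ultimately have "sqrt l * (w \<bullet> w) = 0" by linarith
  then have "w = 0" using lp by simp
  then show ?thesis unfolding w_def by simp
qed

lemma sqrtm:
  fixes S :: "real^'n^'n"
  assumes "psd S"
  shows "psd (sqrtm S)" "sqrtm S ** sqrtm S = S"
proof -
  obtain B where B: "onb B" "\<And>u. u \<in> B \<Longrightarrow> S *v u = (u \<bullet> (S *v u)) *\<^sub>R u"
    using spectral[OF psd_sym[OF assms]] by blast
  define l where "l u = u \<bullet> (S *v u)" for u
  have l0: "l u \<ge> 0" for u using assms unfolding psd_def l_def by auto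
  define R where "R = diagm B (\<lambda>u. sqrt (l u))"
  have psdR: "psd R" unfolding psd_def R_def
    by (auto simp: diagm_sym diagm_quad l0 intro!: sum_nonneg mult_nonneg_nonneg)
  have RR: "R ** R = S"
  proof (rule onb_mat_eq[OF B(1)])
    fix u assume u: "u \<in> B"
    have "(R ** R) *v u = R *v (R *v u)" by (simp add: matrix_vector_mul_assoc)
    also have "\<dots> = l u *\<^sub>R u" unfolding R_def using u B(1) l0[of u]
      by (simp add: diagm_basis matrix_vector_mult_scaleR)
    also have "\<dots> = S *v u" using B(2)[OF u] l_def by simp
    finally show "(R ** R) *v u = S *v u" .
  qed
  have uniq: "R' = R" if "psd R'" "R' ** R' = S" for R'
  proof (rule onb_mat_eq[OF B(1)])
    fix u assume u: "u \<in> B"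
    have "R' *v u = sqrt (l u) *\<^sub>R u"
      using sqrt_unique_basis[OF that B(2)[OF u] l0[of u, unfolded l_def]] unfolding l_def by simp
    also have "\<dots> = R *v u" unfolding R_def using u B(1) by (simp add: diagm_basis)
    finally show "R' *v u = R *v u" .
  qed
  have "sqrtm S = R" unfolding sqrtm_def
  proof (rule the_equality)
    show "psd R \<and> R ** R = S" using psdR RR by simp
    fix R' assume "psd R' \<and> R' ** R' = S" then show "R' = R" using uniq by blast
  qed
  then show "psd (sqrtm S)" "sqrtm S ** sqrtm S = S" using psdR RR by auto
qed


lemma pinv_unique:
  fixes A :: "real^'n^'m"
  assumes B: "is_pinv A B" and C: "is_pinv A C"
  shows "B = C"
proof -
  have B1: "A ** B ** A = A" and B2: "B ** A ** B = B" and B3: "transpose (A ** B) = A ** B"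
    and B4: "transpose (B ** A) = B ** A" using B unfolding is_pinv_def by auto
  have C1: "A ** C ** A = A" and C2: "C ** A ** C = C" and C3: "transpose (A ** C) = A ** C"
    and C4: "transpose (C ** A) = C ** A" using C unfolding is_pinv_def by auto
  have "B = B ** (A ** B)" using B2 by (simp add: matrix_mul_assoc)
  also have "\<dots> = B ** transpose (A ** B)" using B3 by simp
  also have "\<dots> = B ** (transpose B ** transpose A)" by (simp add: matrix_transpose_mul)
  also have "transpose A = transpose (A ** C ** A)" using C1 by simp
  also have "\<dots> = transpose A ** transpose (A ** C)" by (simp add: matrix_transpose_mul)
  also have "\<dots> = transpose A ** (A ** C)" using C3 by simp
  also have "B ** (transpose B ** (transpose A ** (A ** C))) = B ** transpose (A ** B) ** (A ** C)"
    by (simp add: matrix_transpose_mul matrix_mul_assoc)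
  also have "\<dots> = B ** A ** C" using B3 B2 by (simp add: matrix_mul_assoc)
  finally have eB: "B = B ** A ** C" .
  have "C = (C ** A) ** C" using C2 by (simp add: matrix_mul_assoc)
  also have "\<dots> = transpose (C ** A) ** C" using C4 by simp
  also have "\<dots> = transpose A ** transpose C ** C" by (simp add: matrix_transpose_mul)
  also have "transpose A = transpose (A ** B ** A)" using B1 by simp
  also have "\<dots> = transpose (B ** A) ** transpose A" by (simp add: matrix_transpose_mul matrix_mul_assoc)
  also have "\<dots> = B ** A ** transpose A" using B4 by simp
  also have "B ** A ** transpose A ** transpose C ** C = B ** A ** transpose (C ** A) ** C"
    by (simp add: matrix_transpose_mul matrix_mul_assoc)
  also have "\<dots> = B ** A ** (C ** A ** C)" using C4 by (simp add: matrix_mul_assoc)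
  also have "\<dots> = B ** A ** C" using C2 by simp
  finally have eC: "C = B ** A ** C" .
  show ?thesis using eB eC by simp
qed

lemma pinv_sym:
  fixes R :: "real^'n^'n"
  assumes "transpose R = R"
  shows "is_pinv R (pinv R)" "transpose (pinv R) = pinv R" "R ** pinv R = pinv R ** R"
proof -
  obtain B where B: "onb B" "\<And>u. u \<in> B \<Longrightarrow> R *v u = (u \<bullet> (R *v u)) *\<^sub>R u"
    using spectral[OF assms] by blast
  define l where "l u = u \<bullet> (R *v u)" for u
  define P where "P = diagm B (\<lambda>u. inverse (l u))"
  have Pu: "P *v u = inverse (l u) *\<^sub>R u" if "u \<in> B" for u
    unfolding P_def using B(1) that by (simp add: diagm_basis)
  have Ru: "R *v u = l u *\<^sub>R u" if "u \<in> B" for u using B(2) that l_def by simp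
  have RP: "R ** P = diagm B (\<lambda>u. l u * inverse (l u))"
    by (rule sym_diagm[OF B(1)]) (simp add: matrix_vector_mul_assoc[symmetric] Pu Ru matrix_vector_mult_scaleR)
  have PR: "P ** R = diagm B (\<lambda>u. l u * inverse (l u))"
    by (rule sym_diagm[OF B(1)]) (simp add: matrix_vector_mul_assoc[symmetric] Pu Ru matrix_vector_mult_scaleR)
  have "is_pinv R P" unfolding is_pinv_def
  proof (intro conjI)
    show "R ** P ** R = R"
      proof (rule onb_mat_eq[OF B(1)])
        fix u assume u: "u \<in> B"
        have "(R ** P ** R) *v u = (l u * inverse (l u) * l u) *\<^sub>R u"
          using u by (simp add: matrix_vector_mul_assoc[symmetric] Pu Ru matrix_vector_mult_scaleR)
        also have "l u * inverse (l u) * l u = l u"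
          by (cases "l u = 0") auto
        finally show "(R ** P ** R) *v u = R *v u" using Ru[OF u] by simp
      qed
    show "P ** R ** P = P"
      proof (rule onb_mat_eq[OF B(1)])
        fix u assume u: "u \<in> B"
        have "(P ** R ** P) *v u = (inverse (l u) * l u * inverse (l u)) *\<^sub>R u"
          using u by (simp add: matrix_vector_mul_assoc[symmetric] Pu Ru matrix_vector_mult_scaleR)
        also have "inverse (l u) * l u * inverse (l u) = inverse (l u)"
          by (cases "l u = 0") auto
        finally show "(P ** R ** P) *v u = P *v u" using Pu[OF u] by simp
      qed
    show "transpose (R ** P) = R ** P" unfolding RP by (rule diagm_sym)
    show "transpose (P ** R) = P ** R" unfolding PR by (rule diagm_sym)
  qed
  then have eq: "pinv R = P" unfolding pinv_def using pinv_unique by blast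
  show "is_pinv R (pinv R)" using eq \<open>is_pinv R P\<close> by simp
  show "transpose (pinv R) = pinv R" unfolding eq P_def by (rule diagm_sym)
  show "R ** pinv R = pinv R ** R" unfolding eq RP PR ..
qed



definition finner :: "real^'n^'m \<Rightarrow> real^'n^'m \<Rightarrow> real" where
  "finner A B = (\<Sum>i\<in>UNIV. \<Sum>j\<in>UNIV. A $ i $ j * B $ i $ j)"

lemma frob_sq_finner: "frob_sq A = finner A A"
  unfolding frob_sq_def finner_def by (simp add: power2_eq_square)

lemma finner_comm: "finner A B = finner B A"
  unfolding finner_def by (simp add: mult.commute)

lemma finner_add_left: "finner (A + B) C = finner A C + finner B C"
  unfolding finner_def by (simp add: algebra_simps sum.distrib)

lemma finner_diff_left: "finner (A - B) C = finner A C - finner B C"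
  unfolding finner_def by (simp add: algebra_simps sum_subtractf)

lemma finner_scaleR_left: "finner (c *\<^sub>R A) C = c * finner A C"
  unfolding finner_def by (simp add: sum_distrib_left mult.assoc)

lemma finner_zero: "finner 0 C = 0" by (simp add: finner_def)

lemma finner_sum_left: "finner (\<Sum>i\<in>I. f i) C = (\<Sum>i\<in>I. finner (f i) C)"
  by (induction I rule: infinite_finite_induct) (simp_all add: finner_add_left finner_zero)

lemma finner_add_right: "finner C (A + B) = finner C A + finner C B"
  unfolding finner_comm[of C] by (rule finner_add_left)
lemma finner_diff_right: "finner C (A - B) = finner C A - finner C B"
  unfolding finner_comm[of C] by (rule finner_diff_left)
lemma finner_scaleR_right: "finner C (c *\<^sub>R A) = c * finner C A"
  unfolding finner_comm[of C] by (rule finner_scaleR_left)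
lemma finner_sum_right: "finner C (\<Sum>i\<in>I. f i) = (\<Sum>i\<in>I. finner C (f i))"
  unfolding finner_comm[of C] by (rule finner_sum_left)

lemma finner_outer: "finner (outer a b) (outer c d) = (a \<bullet> c) * (b \<bullet> d)"
proof -
  have "(a \<bullet> c) * (b \<bullet> d) = (\<Sum>i\<in>UNIV. \<Sum>j\<in>UNIV. (a$i*c$i)*(b$j*d$j))"
    unfolding inner_vec_def inner_real_def by (rule sum_product)
  also have "\<dots> = finner (outer a b) (outer c d)"
    unfolding finner_def outer_def by (intro sum.cong refl) (simp add: mult_ac)
  finally show ?thesis by (rule sym)
qed

lemma finner_mult: "finner (A ** B) C = finner A (C ** transpose B)"
proof -
  have "finner (A ** B) C = (\<Sum>i\<in>UNIV. \<Sum>j\<in>UNIV. \<Sum>k\<in>UNIV. A$i$k * B$k$j * C$i$j)"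
    unfolding finner_def matrix_matrix_mult_def by (simp add: sum_distrib_right)
  also have "\<dots> = (\<Sum>i\<in>UNIV. \<Sum>k\<in>UNIV. \<Sum>j\<in>UNIV. A$i$k * B$k$j * C$i$j)"
    by (rule sum.cong[OF refl], rule sum.swap)
  also have "\<dots> = finner A (C ** transpose B)"
    unfolding finner_def matrix_matrix_mult_def transpose_def
    by (simp add: sum_distrib_left) (intro sum.cong refl, simp add: mult_ac)
  finally show ?thesis .
qed

lemma frob_sq_diff: "frob_sq (A - K) = frob_sq A - 2 * finner A K + frob_sq K"
  unfolding frob_sq_finner by (simp add: finner_diff_left finner_diff_right finner_comm[of K A])

lemma frob_sq_nonneg: "frob_sq A \<ge> 0"
  unfolding frob_sq_def by (intro sum_nonneg) auto

lemma frob_sq_uminus: "frob_sq (- A) = frob_sq A"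
  unfolding frob_sq_def by simp

lemma frob_sq_cols: "frob_sq M = (\<Sum>c\<in>UNIV. norm (M *v axis c 1) ^ 2)"
proof -
  have "(M *v axis c 1) $ i = M $ i $ c" for c i
    by (simp add: matrix_vector_mult_basis column_def)
  then have "norm (M *v axis c 1) ^ 2 = (\<Sum>i\<in>UNIV. (M $ i $ c)\<^sup>2)" for c
    unfolding power2_norm_eq_inner inner_vec_def by (simp add: power2_eq_square)
  then have "(\<Sum>c\<in>UNIV. norm (M *v axis c 1) ^ 2) = (\<Sum>c\<in>UNIV. \<Sum>i\<in>UNIV. (M $ i $ c)\<^sup>2)"
    by simp
  then show ?thesis unfolding frob_sq_def by (metis (no_types) sum.swap[of "\<lambda>i c. (M $ i $ c)\<^sup>2" UNIV UNIV])
qed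

definition orthonormal_on :: "'j set \<Rightarrow> ('j \<Rightarrow> real^'n) \<Rightarrow> bool" where
  "orthonormal_on J e \<longleftrightarrow> (\<forall>j\<in>J. \<forall>l\<in>J. e j \<bullet> e l = (if j = l then 1 else 0))"

lemma orthonormal_on_subset: "orthonormal_on J e \<Longrightarrow> I \<subseteq> J \<Longrightarrow> orthonormal_on I e"
  unfolding orthonormal_on_def by blast

lemma orthonormal_inner_sum:
  assumes "orthonormal_on J e" "finite J"
  shows "(\<Sum>j\<in>J. a j *\<^sub>R e j) \<bullet> (\<Sum>j\<in>J. b j *\<^sub>R e j) = (\<Sum>j\<in>J. a j * b j)"
proof -
  have "(\<Sum>j\<in>J. a j *\<^sub>R e j) \<bullet> (\<Sum>j\<in>J. b j *\<^sub>R e j) = (\<Sum>l\<in>J. \<Sum>j\<in>J. a j * b l * (e j \<bullet> e l))"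
    unfolding inner_sum_left inner_scaleR_left inner_sum_right inner_scaleR_right
    by (simp add: sum_distrib_left mult_ac)
  also have "\<dots> = (\<Sum>l\<in>J. \<Sum>j\<in>J. if j = l then a l * b l else 0)"
    using assms(1) unfolding orthonormal_on_def by (intro sum.cong refl) auto
  also have "\<dots> = (\<Sum>j\<in>J. a j * b j)" using assms(2) by simp
  finally show ?thesis .
qed

lemma bessel:
  assumes "orthonormal_on J e" "finite J"
  shows "(\<Sum>j\<in>J. (e j \<bullet> y)\<^sup>2) \<le> y \<bullet> y"
proof -
  define p where "p = (\<Sum>j\<in>J. (e j \<bullet> y) *\<^sub>R e j)"
  have pp: "p \<bullet> p = (\<Sum>j\<in>J. (e j \<bullet> y)\<^sup>2)" unfolding p_def
    using orthonormal_inner_sum[OF assms] by (simp add: power2_eq_square)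
  have yp: "y \<bullet> p = (\<Sum>j\<in>J. (e j \<bullet> y)\<^sup>2)" unfolding p_def
    by (simp add: inner_sum_right power2_eq_square inner_commute)
  have "0 \<le> (y - p) \<bullet> (y - p)" by simp
  also have "\<dots> = y \<bullet> y - 2 * (y \<bullet> p) + p \<bullet> p" by (simp add: inner_diff_left inner_diff_right inner_commute)
  finally show ?thesis using pp yp by simp
qed

lemma proj_ineq:
  assumes "orthonormal_on J e" "finite J" "x \<in> span (e ` J)"
  shows "norm (k - x) ^ 2 \<ge> k \<bullet> k - (\<Sum>j\<in>J. (e j \<bullet> k)\<^sup>2)"
proof -
  have inj: "inj_on e J" using assms(1) unfolding orthonormal_on_def inj_on_def
    by (metis one_neq_zero)
  have on: "pairwise orthogonal (e ` J)" "\<And>u. u \<in> e ` J \<Longrightarrow> norm u = 1"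
    using assms(1) unfolding orthonormal_on_def pairwise_def orthogonal_def
    by (auto simp: norm_eq_1)
  have "x = (\<Sum>u\<in>e ` J. (x \<bullet> u) *\<^sub>R u)"
    using orthonormal_basis_expand[OF on assms(3)] assms(2) by simp
  also have "\<dots> = (\<Sum>j\<in>J. (e j \<bullet> x) *\<^sub>R e j)" using inj by (simp add: sum.reindex inner_commute mult.commute)
  finally have xe: "x = (\<Sum>j\<in>J. (e j \<bullet> x) *\<^sub>R e j)" .
  have xx: "x \<bullet> x = (\<Sum>j\<in>J. (e j \<bullet> x)\<^sup>2)"
    by (subst (1 2) xe) (simp add: orthonormal_inner_sum[OF assms(1,2)] power2_eq_square)
  have kx: "k \<bullet> x = (\<Sum>j\<in>J. (e j \<bullet> k) * (e j \<bullet> x))"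
    by (subst xe) (simp add: inner_sum_right inner_commute mult.commute)
  have "norm (k - x) ^ 2 = k \<bullet> k - 2 * (k \<bullet> x) + x \<bullet> x"
    by (simp add: power2_norm_eq_inner inner_diff_left inner_diff_right inner_commute)
  also have "\<dots> = k \<bullet> k - (\<Sum>j\<in>J. (e j \<bullet> k)\<^sup>2) + (\<Sum>j\<in>J. (e j \<bullet> k - e j \<bullet> x)\<^sup>2)"
    unfolding kx xx by (simp add: power2_diff sum.distrib sum_subtractf sum_distrib_left algebra_simps)
  also have "\<dots> \<ge> k \<bullet> k - (\<Sum>j\<in>J. (e j \<bullet> k)\<^sup>2)" by (simp add: sum_nonneg)
  finally show ?thesis .
qed


lemma mono_decr:
  fixes b :: "nat \<Rightarrow> real"
  assumes step: "\<And>j. 1 \<le> j \<Longrightarrow> j < r \<Longrightarrow> b (Suc j) \<le> b j"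
  assumes "1 \<le> j" "j \<le> k" "k \<le> r"
  shows "b k \<le> b j"
  using assms(3,4)
proof (induction k rule: dec_induct)
  case base then show ?case by simp
next
  case (step n)
  then have "b (Suc n) \<le> b n" using assms(1,2) by simp
  with step show ?case by simp
qed

lemma rearr:
  fixes b w :: "nat \<Rightarrow> real"
  assumes mono: "\<And>j k. 1 \<le> j \<Longrightarrow> j \<le> k \<Longrightarrow> k \<le> r \<Longrightarrow> b k \<le> b j"
    and bnn: "\<And>j. j \<in> {1..r} \<Longrightarrow> b j \<ge> 0"
    and bz: "\<And>j. r < j \<Longrightarrow> b j = 0"
    and w01: "\<And>j. j \<in> {1..r} \<Longrightarrow> 0 \<le> w j \<and> w j \<le> 1"
    and wsum: "(\<Sum>j\<in>{1..r}. w j) \<le> real eta"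
  shows "(\<Sum>j\<in>{1..r}. b j * w j) \<le> (\<Sum>j\<in>{1..eta}. b j)"
proof (cases "r \<le> eta")
  case True
  have "(\<Sum>j\<in>{1..r}. b j * w j) \<le> (\<Sum>j\<in>{1..r}. b j)"
    using bnn w01 by (intro sum_mono) (simp add: mult_left_le)
  also have "\<dots> = (\<Sum>j\<in>{1..eta}. b j)"
    using True bz by (intro sum.mono_neutral_right[symmetric]) auto
  finally show ?thesis .
next
  case False
  show ?thesis
  proof (cases "eta = 0")
    case True
    have "0 \<le> (\<Sum>j\<in>{1..r}. w j)" by (rule sum_nonneg) (use w01 in auto)
    then have "(\<Sum>j\<in>{1..r}. w j) = 0" using wsum True by linarith
    then have "\<forall>j\<in>{1..r}. w j = 0" using w01 by (subst (asm) sum_nonneg_eq_0_iff) auto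
    then show ?thesis using True by simp
  next
    case False2: False
    define c where "c = b eta"
    have c0: "c \<ge> 0" using bnn False False2 unfolding c_def by simp
    have split: "{1..r} = {1..eta} \<union> {Suc eta..r}" using False by auto
    have disj: "{1..eta} \<inter> {Suc eta..r} = {}" by auto
    have s1: "(\<Sum>j\<in>{1..eta}. b j * w j) \<le> (\<Sum>j\<in>{1..eta}. b j - c * (1 - w j))"
    proof (intro sum_mono)
      fix j assume j: "j \<in> {1..eta}"
      then have "b j \<ge> c" unfolding c_def using mono[of j eta] False by auto
      moreover have "1 - w j \<ge> 0" using w01[of j] j False by auto
      ultimately have "c * (1 - w j) \<le> b j * (1 - w j)" by (intro mult_right_mono)
      then show "b j * w j \<le> b j - c * (1 - w j)" by (simp add: algebra_simps)
    qed
    have s2: "(\<Sum>j\<in>{Suc eta..r}. b j * w j) \<le> (\<Sum>j\<in>{Suc eta..r}. c * w j)"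
    proof (intro sum_mono)
      fix j assume j: "j \<in> {Suc eta..r}"
      then have "b j \<le> c" unfolding c_def using mono[of eta j] False2 by auto
      moreover have "w j \<ge> 0" using w01[of j] j False2 by auto
      ultimately show "b j * w j \<le> c * w j" by (intro mult_right_mono)
    qed
    have "(\<Sum>j\<in>{1..r}. b j * w j) = (\<Sum>j\<in>{1..eta}. b j * w j) + (\<Sum>j\<in>{Suc eta..r}. b j * w j)"
      unfolding split by (rule sum.union_disjoint) (use disj in auto)
    also have "\<dots> \<le> (\<Sum>j\<in>{1..eta}. b j - c * (1 - w j)) + (\<Sum>j\<in>{Suc eta..r}. c * w j)"
      using s1 s2 by linarith
    also have "\<dots> = (\<Sum>j\<in>{1..eta}. b j) + c * ((\<Sum>j\<in>{1..eta}. w j) + (\<Sum>j\<in>{Suc eta..r}. w j) - real eta)"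
      by (simp add: sum_subtractf sum_distrib_left sum.distrib algebra_simps)
    also have "(\<Sum>j\<in>{1..eta}. w j) + (\<Sum>j\<in>{Suc eta..r}. w j) = (\<Sum>j\<in>{1..r}. w j)"
      unfolding split by (rule sum.union_disjoint[symmetric]) (use disj in auto)
    also have "(\<Sum>j\<in>{1..eta}. b j) + c * ((\<Sum>j\<in>{1..r}. w j) - real eta) \<le> (\<Sum>j\<in>{1..eta}. b j)"
      using c0 wsum by (simp add: mult_nonneg_nonpos)
    finally show ?thesis .
  qed
qed

lemma frob_sq_svd:
  fixes s :: "nat \<Rightarrow> real^'m" and d :: "nat \<Rightarrow> real^'n"
  assumes "orthonormal_on J s" "orthonormal_on J d" "finite J"
  shows "frob_sq (\<Sum>j\<in>J. a j *\<^sub>R outer (s j) (d j)) = (\<Sum>j\<in>J. (a j)\<^sup>2)"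
proof -
  have "frob_sq (\<Sum>j\<in>J. a j *\<^sub>R outer (s j) (d j)) =
      (\<Sum>j\<in>J. \<Sum>l\<in>J. a j * a l * ((s l \<bullet> s j) * (d l \<bullet> d j)))"
    unfolding frob_sq_finner finner_sum_left finner_sum_right finner_scaleR_left finner_scaleR_right finner_outer
    by (simp add: sum_distrib_left mult_ac)
  also have "\<dots> = (\<Sum>j\<in>J. \<Sum>l\<in>J. if l = j then (a j)\<^sup>2 else 0)"
    using assms(1,2) unfolding orthonormal_on_def by (intro sum.cong refl) (auto simp: power2_eq_square)
  also have "\<dots> = (\<Sum>j\<in>J. (a j)\<^sup>2)" using assms(3) by simp
  finally show ?thesis .
qed

lemma inner_mulv_transpose: "x \<bullet> (A *v y) = (transpose A *v x) \<bullet> (y::real^'n)"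
  for A :: "real^'n^'m"
  by (simp add: dot_lmul_matrix[symmetric])

lemma eckart_young:
  fixes K X :: "real^'n^'m" and s :: "nat \<Rightarrow> real^'m" and d :: "nat \<Rightarrow> real^'n"
  assumes K: "K = (\<Sum>j\<in>{1..r}. \<beta> j *\<^sub>R outer (s j) (d j))"
    and so: "orthonormal_on {1..r} s" and dor: "orthonormal_on {1..r} d"
    and mono: "\<And>j. 1 \<le> j \<Longrightarrow> j < r \<Longrightarrow> \<beta> (Suc j) \<le> \<beta> j"
    and pos: "\<And>j. j \<in> {1..r} \<Longrightarrow> 0 < \<beta> j"
    and bz: "\<And>j. r < j \<Longrightarrow> \<beta> j = 0"
    and rk: "rank X \<le> eta"
  shows "frob_sq K - (\<Sum>j\<in>{1..eta}. (\<beta> j)\<^sup>2) \<le> frob_sq (X - K)"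
proof -
  define C where "C = span (range (\<lambda>x. X *v x))"
  have "subspace C" unfolding C_def by simp
  then obtain U where U: "U \<subseteq> C" "pairwise orthogonal U" "\<And>x. x \<in> U \<Longrightarrow> norm x = 1"
    "independent U" "card U = dim C" "span U = C"
    by (rule orthonormal_basis_subspace) blast
  have fU: "finite U" using U(4) independent_imp_finite by blast
  have cardU: "card U \<le> eta" using U(5) rk unfolding C_def by (simp add: rank_dim_range)
  have onU: "orthonormal_on U id" unfolding orthonormal_on_def
    using U(2,3) unfolding pairwise_def orthogonal_def by (auto simp: norm_eq_1)
  have fK: "frob_sq K = (\<Sum>j\<in>{1..r}. (\<beta> j)\<^sup>2)"
    unfolding K by (rule frob_sq_svd[OF so dor]) simp
  define w where "w j = (\<Sum>u\<in>U. (u \<bullet> s j)\<^sup>2)" for j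
  have KT: "transpose K *v u = (\<Sum>j\<in>{1..r}. (\<beta> j * (s j \<bullet> u)) *\<^sub>R d j)" for u
    unfolding K transpose_sum transpose_scaleR transpose_outer sum_mulv scaleR_mulv outer_mulv
    by simp
  have colsum: "(\<Sum>c\<in>UNIV. (u \<bullet> (K *v axis c 1))\<^sup>2) = (\<Sum>j\<in>{1..r}. (\<beta> j)\<^sup>2 * (u \<bullet> s j)\<^sup>2)" for u
  proof -
    have "(\<Sum>c\<in>UNIV. (u \<bullet> (K *v axis c 1))\<^sup>2) = (transpose K *v u) \<bullet> (transpose K *v u)"
      unfolding inner_mulv_transpose[of u K] cart_eq_inner_axis[symmetric]
      by (simp add: inner_vec_def power2_eq_square)
    also have "\<dots> = (\<Sum>j\<in>{1..r}. (\<beta> j * (s j \<bullet> u)) * (\<beta> j * (s j \<bullet> u)))"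
      unfolding KT by (rule orthonormal_inner_sum[OF dor]) simp
    finally show ?thesis by (simp add: power2_eq_square inner_commute mult_ac)
  qed
  have "frob_sq (X - K) = (\<Sum>c\<in>UNIV. norm (K *v axis c 1 - X *v axis c 1) ^ 2)"
    unfolding frob_sq_cols by (simp add: matrix_vector_mult_diff_rdistrib norm_minus_commute)
  also have "\<dots> \<ge> (\<Sum>c\<in>UNIV. (K *v axis c 1) \<bullet> (K *v axis c 1) - (\<Sum>u\<in>U. (u \<bullet> (K *v axis c 1))\<^sup>2))"
  proof (intro sum_mono)
    fix c :: 'n
    have "X *v axis c 1 \<in> span (id ` U)" using U(6) unfolding C_def by (simp add: span_base)
    from proj_ineq[OF onU fU this] show "(K *v axis c 1) \<bullet> (K *v axis c 1) - (\<Sum>u\<in>U. (u \<bullet> (K *v axis c 1))\<^sup>2)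
        \<le> norm (K *v axis c 1 - X *v axis c 1) ^ 2" by simp
  qed
  finally have "frob_sq (X - K) \<ge> frob_sq K - (\<Sum>u\<in>U. \<Sum>c\<in>UNIV. (u \<bullet> (K *v axis c 1))\<^sup>2)"
    unfolding frob_sq_cols by (simp add: sum_subtractf power2_norm_eq_inner sum.swap[of _ UNIV U])
  also have "(\<Sum>u\<in>U. \<Sum>c\<in>UNIV. (u \<bullet> (K *v axis c 1))\<^sup>2) = (\<Sum>j\<in>{1..r}. (\<beta> j)\<^sup>2 * w j)"
    unfolding colsum w_def by (simp add: sum_distrib_left sum.swap[of _ U])
  finally have main: "frob_sq (X - K) \<ge> frob_sq K - (\<Sum>j\<in>{1..r}. (\<beta> j)\<^sup>2 * w j)" .
  have "(\<Sum>j\<in>{1..r}. (\<beta> j)\<^sup>2 * w j) \<le> (\<Sum>j\<in>{1..eta}. (\<beta> j)\<^sup>2)"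
  proof (rule rearr[where r = r])
    fix j k assume jk: "1 \<le> j" "j \<le> k" "k \<le> r"
    have "\<beta> k \<le> \<beta> j" by (rule mono_decr[of r \<beta>, OF mono jk])
    moreover have "0 < \<beta> k" using pos jk by auto
    ultimately show "(\<beta> k)\<^sup>2 \<le> (\<beta> j)\<^sup>2" by (simp add: power_mono)
  next
    fix j assume "r < j" then show "(\<beta> j)\<^sup>2 = 0" using bz by simp
  next
    fix j :: nat assume j: "j \<in> {1..r}"
    have "w j \<le> s j \<bullet> s j" unfolding w_def using bessel[OF onU fU, of "s j"] by (simp add: inner_commute)
    also have "\<dots> = 1" using so j unfolding orthonormal_on_def by auto
    finally show "0 \<le> w j \<and> w j \<le> 1" unfolding w_def by (auto intro: sum_nonneg)
  next
    have "(\<Sum>j\<in>{1..r}. w j) = (\<Sum>u\<in>U. \<Sum>j\<in>{1..r}. (s j \<bullet> u)\<^sup>2)"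
      unfolding w_def by (simp add: sum.swap[of _ U] inner_commute)
    also have "\<dots> \<le> (\<Sum>u\<in>U. u \<bullet> u)" by (intro sum_mono bessel[OF so]) simp
    also have "\<dots> = real (card U)" using U(3) by (simp add: norm_eq_1)
    also have "\<dots> \<le> real eta" using cardU by simp
    finally show "(\<Sum>j\<in>{1..r}. w j) \<le> real eta" .
  qed simp
  then show ?thesis using main by linarith
qed



definition L2s :: "'w measure \<Rightarrow> ('w \<Rightarrow> real) \<Rightarrow> bool" where
  "L2s M f \<longleftrightarrow> f \<in> borel_measurable M \<and> integrable M (\<lambda>w. (f w)\<^sup>2)"

lemma comp_sq_le: "(x $ i)\<^sup>2 \<le> (norm (x::real^'n))\<^sup>2"
  using component_le_norm_cart[of x i] abs_le_square_iff[of "x $ i" "norm x"] by simp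

lemma abs_le_1_sq: "\<bar>a::real\<bar> \<le> 1 + a\<^sup>2"
proof (cases "\<bar>a\<bar> \<le> 1")
  case True then show ?thesis by (smt (verit) zero_le_power2)
next
  case False
  then have "\<bar>a\<bar> \<le> \<bar>a\<bar> * \<bar>a\<bar>" by (intro mult_le_cancel_left1[THEN iffD2]) auto
  then show ?thesis by (simp add: power2_eq_square abs_mult[symmetric])
qed

lemma abs_mult_le_sq: "\<bar>a * b::real\<bar> \<le> a\<^sup>2 + b\<^sup>2"
proof -
  have "0 \<le> (\<bar>a\<bar> - \<bar>b\<bar>)\<^sup>2" by simp
  then have "2 * (\<bar>a\<bar> * \<bar>b\<bar>) \<le> a\<^sup>2 + b\<^sup>2" by (simp add: power2_diff)
  moreover have "\<bar>a\<bar> * \<bar>b\<bar> \<ge> 0" by simp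
  ultimately have "\<bar>a\<bar> * \<bar>b\<bar> \<le> a\<^sup>2 + b\<^sup>2" by linarith
  then show ?thesis by (simp add: abs_mult)
qed

context prob_space
begin

lemma L2s_int: assumes "L2s M f" shows "integrable M f"
proof (rule Bochner_Integration.integrable_bound)
  show "integrable M (\<lambda>w. 1 + (f w)\<^sup>2)" using assms unfolding L2s_def by simp
  show "f \<in> borel_measurable M" using assms unfolding L2s_def by simp
  show "AE x in M. norm (f x) \<le> norm (1 + (f x)\<^sup>2)"
    using abs_le_1_sq by (intro AE_I2) (smt (verit) real_norm_def zero_le_power2)
qed

lemma L2s_mult: assumes "L2s M f" "L2s M g" shows "integrable M (\<lambda>w. f w * g w)"
proof (rule Bochner_Integration.integrable_bound)
  show "integrable M (\<lambda>w. (f w)\<^sup>2 + (g w)\<^sup>2)" using assms unfolding L2s_def by simp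
  show "(\<lambda>w. f w * g w) \<in> borel_measurable M" using assms unfolding L2s_def by (auto intro!: borel_measurable_times)
  show "AE x in M. norm (f x * g x) \<le> norm ((f x)\<^sup>2 + (g x)\<^sup>2)"
    using abs_mult_le_sq by (intro AE_I2) (smt (verit) real_norm_def zero_le_power2)
qed

lemma L2s_add: assumes "L2s M f" "L2s M g" shows "L2s M (\<lambda>w. f w + g w)"
proof -
  have "integrable M (\<lambda>w. (f w)\<^sup>2 + (g w)\<^sup>2 + 2 * (f w * g w))"
    using assms L2s_mult[OF assms] unfolding L2s_def by simp
  then have "integrable M (\<lambda>w. (f w + g w)\<^sup>2)" by (simp add: power2_sum mult.assoc)
  then show ?thesis using assms unfolding L2s_def by (auto intro!: borel_measurable_add)
qed

lemma L2s_scale: assumes "L2s M f" shows "L2s M (\<lambda>w. c * f w)"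
  using assms unfolding L2s_def by (auto simp: power_mult_distrib intro!: borel_measurable_times)

lemma L2s_const: "L2s M (\<lambda>w. c)"
  unfolding L2s_def by simp

lemma L2s_diff: assumes "L2s M f" "L2s M g" shows "L2s M (\<lambda>w. f w - g w)"
  using L2s_add[OF assms(1) L2s_scale[OF assms(2), of "-1"]] by simp

lemma L2s_sum: "finite I \<Longrightarrow> (\<And>i. i \<in> I \<Longrightarrow> L2s M (f i)) \<Longrightarrow> L2s M (\<lambda>w. \<Sum>i\<in>I. f i w)"
proof (induction I rule: finite_induct)
  case empty then show ?case using L2s_const[of 0] by simp
next
  case (insert x F) then show ?case by (simp add: L2s_add)
qed

lemma L2s_comp: assumes "L2_rv M X" shows "L2s M (\<lambda>w. X w $ i)"
proof -
  have mX: "X \<in> borel_measurable M" using assms unfolding L2_rv_def by simp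
  have m: "(\<lambda>w. X w $ i) \<in> borel_measurable M"
    by (rule measurable_compose[OF mX]) (auto intro: borel_measurable_continuous_onI continuous_intros)
  have "integrable M (\<lambda>w. (X w $ i)\<^sup>2)"
  proof (rule Bochner_Integration.integrable_bound)
    show "integrable M (\<lambda>w. (norm (X w))\<^sup>2)" using assms unfolding L2_rv_def by simp
    show "(\<lambda>w. (X w $ i)\<^sup>2) \<in> borel_measurable M" using m by simp
    show "AE x in M. norm ((X x $ i)\<^sup>2) \<le> norm ((norm (X x))\<^sup>2)"
      by (intro AE_I2) (simp add: comp_sq_le)
  qed
  then show ?thesis using m unfolding L2s_def by simp
qed

lemma E_lin:
  assumes "finite J" "\<And>j. j \<in> J \<Longrightarrow> L2s M (\<phi> j)"
  shows "expectation (\<lambda>w. \<Sum>j\<in>J. c j * \<phi> j w) = (\<Sum>j\<in>J. c j * expectation (\<phi> j))"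
  using assms by (subst Bochner_Integration.integral_sum) (auto intro: L2s_int)

lemma E_lin_mult:
  assumes "finite J" "\<And>j. j \<in> J \<Longrightarrow> L2s M (\<phi> j)" "L2s M X"
  shows "expectation (\<lambda>w. X w * (\<Sum>j\<in>J. c j * \<phi> j w)) = (\<Sum>j\<in>J. c j * expectation (\<lambda>w. X w * \<phi> j w))"
proof -
  have "expectation (\<lambda>w. X w * (\<Sum>j\<in>J. c j * \<phi> j w)) = expectation (\<lambda>w. \<Sum>j\<in>J. c j * (X w * \<phi> j w))"
    by (simp add: sum_distrib_left mult_ac)
  also have "\<dots> = (\<Sum>j\<in>J. c j * expectation (\<lambda>w. X w * \<phi> j w))"
    using assms by (subst Bochner_Integration.integral_sum) (auto intro: L2s_mult)
  finally show ?thesis .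
qed

lemma E_bilin:
  assumes "finite J" "finite L" "\<And>j. j \<in> J \<Longrightarrow> L2s M (\<phi> j)" "\<And>l. l \<in> L \<Longrightarrow> L2s M (\<psi> l)"
  shows "expectation (\<lambda>w. (\<Sum>j\<in>J. c j * \<phi> j w) * (\<Sum>l\<in>L. d l * \<psi> l w)) =
    (\<Sum>j\<in>J. c j * (\<Sum>l\<in>L. d l * expectation (\<lambda>w. \<phi> j w * \<psi> l w)))"
proof -
  have "expectation (\<lambda>w. (\<Sum>j\<in>J. c j * \<phi> j w) * (\<Sum>l\<in>L. d l * \<psi> l w)) =
      expectation (\<lambda>w. \<Sum>j\<in>J. c j * (\<phi> j w * (\<Sum>l\<in>L. d l * \<psi> l w)))"
    by (simp add: sum_distrib_right mult_ac)
  also have "\<dots> = (\<Sum>j\<in>J. c j * expectation (\<lambda>w. \<phi> j w * (\<Sum>l\<in>L. d l * \<psi> l w)))"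
    using assms by (subst Bochner_Integration.integral_sum)
      (auto intro!: L2s_mult L2s_sum L2s_scale)
  also have "\<dots> = (\<Sum>j\<in>J. c j * (\<Sum>l\<in>L. d l * expectation (\<lambda>w. \<phi> j w * \<psi> l w)))"
    using assms by (intro sum.cong refl) (simp add: E_lin_mult)
  finally show ?thesis .
qed

lemma mean_comp: "mean M X $ i = expectation (\<lambda>w. X w $ i)"
  unfolding mean_def by simp

lemma E_ctr: assumes "L2s M f" shows "expectation (\<lambda>w. f w - expectation f) = 0"
  using assms L2s_int[OF assms] by (simp add: prob_space)

lemma L2s_ctr: assumes "L2s M f" shows "L2s M (\<lambda>w. f w - expectation f)"
  by (rule L2s_diff[OF assms L2s_const])

lemma cov_entry:
  assumes "L2_rv M g" "L2_rv M h"
  shows "cov M g h $ i $ j = expectation (\<lambda>w. (g w $ i - mean M g $ i) * (h w $ j - mean M h $ j))"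
proof -
  define a where "a = mean M g $ i"
  define b where "b = mean M h $ j"
  have gi: "L2s M (\<lambda>w. g w $ i)" and hj: "L2s M (\<lambda>w. h w $ j)" using L2s_comp assms by auto
  have Ea: "expectation (\<lambda>w. g w $ i) = a" and Eb: "expectation (\<lambda>w. h w $ j) = b"
    unfolding a_def b_def mean_comp by simp_all
  have "expectation (\<lambda>w. (g w $ i - a) * (h w $ j - b)) =
      expectation (\<lambda>w. g w $ i * h w $ j - b * g w $ i - a * h w $ j + a * b)"
    by (simp add: algebra_simps)
  also have "\<dots> = expectation (\<lambda>w. g w $ i * h w $ j) - b * a - a * b + a * b"
    using L2s_int[OF gi] L2s_int[OF hj] L2s_mult[OF gi hj] Ea Eb by (simp add: prob_space)
  finally show ?thesis unfolding cov_def a_def b_def by simp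
qed


lemma quad_expand:
  assumes X: "L2s M X" "expectation X = 0" and Z: "L2s M Z" "expectation Z = 0"
  shows "expectation (\<lambda>w. (X w - Z w + m)\<^sup>2) =
    expectation (\<lambda>w. (X w)\<^sup>2) - 2 * expectation (\<lambda>w. X w * Z w) + expectation (\<lambda>w. (Z w)\<^sup>2) + m\<^sup>2"
proof -
  have iX2: "integrable M (\<lambda>w. (X w)\<^sup>2)" and iZ2: "integrable M (\<lambda>w. (Z w)\<^sup>2)"
    using X Z unfolding L2s_def by auto
  have iXZ: "integrable M (\<lambda>w. X w * Z w)" by (rule L2s_mult[OF X(1) Z(1)])
  have iX: "integrable M X" and iZ: "integrable M Z" using L2s_int X Z by auto
  have eq: "(\<lambda>w. (X w - Z w + m)\<^sup>2) =
      (\<lambda>w. (((((X w)\<^sup>2 - 2 * (X w * Z w)) + (Z w)\<^sup>2) + 2 * m * X w) - 2 * m * Z w) + m\<^sup>2)"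
    by (auto simp: power2_eq_square algebra_simps)
  have "expectation (\<lambda>w. (((((X w)\<^sup>2 - 2 * (X w * Z w)) + (Z w)\<^sup>2) + 2 * m * X w) - 2 * m * Z w) + m\<^sup>2)
    = expectation (\<lambda>w. (X w)\<^sup>2) - 2 * expectation (\<lambda>w. X w * Z w) + expectation (\<lambda>w. (Z w)\<^sup>2)
      + 2 * m * expectation X - 2 * m * expectation Z + m\<^sup>2"
    using iX2 iZ2 iXZ iX iZ by (simp add: prob_space)
  then show ?thesis unfolding eq using X(2) Z(2) by simp
qed

lemma J_expand:
  fixes x :: "'a \<Rightarrow> real^'m" and v :: "nat \<Rightarrow> 'a \<Rightarrow> real^'n" and F :: "nat \<Rightarrow> real^'n^'m"
    and f :: "real^'m"
  assumes x: "L2_rv M x" and v: "\<And>k. k \<in> I \<Longrightarrow> L2_rv M (v k)" and fin: "finite I"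
    and orth: "\<And>k l. k \<in> I \<Longrightarrow> l \<in> I \<Longrightarrow> k \<noteq> l \<Longrightarrow> cov M (v k) (v l) = 0"
  shows "expectation (\<lambda>w. (norm (x w - f - (\<Sum>k\<in>I. F k *v v k w)))\<^sup>2) =
    (norm (mean M x - f - (\<Sum>k\<in>I. F k *v mean M (v k))))\<^sup>2 + trace (cov M x x)
    + (\<Sum>k\<in>I. finner (F k ** cov M (v k) (v k)) (F k) - 2 * finner (F k) (cov M x (v k)))"
proof -
  define Xc where "Xc i w = x w $ i - mean M x $ i" for i w
  define Vc where "Vc k a w = v k w $ a - mean M (v k) $ a" for k a w
  define ZK where "ZK i k w = (\<Sum>a\<in>UNIV. F k $ i $ a * Vc k a w)" for i k w
  define Zc where "Zc i w = (\<Sum>k\<in>I. 1 * ZK i k w)" for i w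
  define m where "m = mean M x - f - (\<Sum>k\<in>I. F k *v mean M (v k))"
  have LX: "L2s M (Xc i)" for i unfolding Xc_def mean_comp by (intro L2s_ctr L2s_comp x)
  have EX: "expectation (Xc i) = 0" for i unfolding Xc_def mean_comp by (intro E_ctr L2s_comp x)
  have LV: "L2s M (Vc k a)" if "k \<in> I" for k a unfolding Vc_def mean_comp by (intro L2s_ctr L2s_comp v that)
  have EV: "expectation (Vc k a) = 0" if "k \<in> I" for k a unfolding Vc_def mean_comp by (intro E_ctr L2s_comp v that)
  have LZK: "L2s M (ZK i k)" if "k \<in> I" for i k unfolding ZK_def
    by (intro L2s_sum L2s_scale LV that) simp
  have EZK: "expectation (ZK i k) = 0" if "k \<in> I" for i k unfolding ZK_def
    using E_lin[of UNIV "Vc k"] LV EV that by simp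
  have LZ: "L2s M (Zc i)" for i unfolding Zc_def
    by (intro L2s_sum L2s_scale LZK fin)
  have EZ: "expectation (Zc i) = 0" for i unfolding Zc_def
    using E_lin[OF fin, where \<phi>="ZK i" and c="\<lambda>_. 1"] LZK EZK by simp
  have decomp: "(x w - f - (\<Sum>k\<in>I. F k *v v k w)) $ i = Xc i w - Zc i w + m $ i" for w i
  proof -
    have "(\<Sum>k\<in>I. F k *v v k w) $ i = (\<Sum>k\<in>I. \<Sum>a\<in>UNIV. F k $ i $ a * v k w $ a)"
      by (simp add: sum_component matrix_vector_mult_def)
    moreover have "m $ i = mean M x $ i - f $ i - (\<Sum>k\<in>I. \<Sum>a\<in>UNIV. F k $ i $ a * mean M (v k) $ a)"
      unfolding m_def by (simp add: sum_component matrix_vector_mult_def)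
    moreover have "Zc i w = (\<Sum>k\<in>I. \<Sum>a\<in>UNIV. F k $ i $ a * v k w $ a) - (\<Sum>k\<in>I. \<Sum>a\<in>UNIV. F k $ i $ a * mean M (v k) $ a)"
      unfolding Zc_def ZK_def Vc_def by (simp add: right_diff_distrib sum_subtractf)
    ultimately show ?thesis unfolding Xc_def by simp
  qed
  have comp: "expectation (\<lambda>w. (Xc i w - Zc i w + m $ i)\<^sup>2) =
      cov M x x $ i $ i - 2 * (\<Sum>k\<in>I. \<Sum>a\<in>UNIV. F k $ i $ a * cov M x (v k) $ i $ a)
      + (\<Sum>k\<in>I. \<Sum>a\<in>UNIV. F k $ i $ a * (\<Sum>b\<in>UNIV. F k $ i $ b * cov M (v k) (v k) $ a $ b))
      + (m $ i)\<^sup>2" for i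
  proof -
    have e1: "expectation (\<lambda>w. (Xc i w)\<^sup>2) = cov M x x $ i $ i"
      unfolding cov_entry[OF x x] Xc_def by (simp add: power2_eq_square)
    have e2: "expectation (\<lambda>w. Xc i w * Zc i w) = (\<Sum>k\<in>I. \<Sum>a\<in>UNIV. F k $ i $ a * cov M x (v k) $ i $ a)"
    proof -
      have "expectation (\<lambda>w. Xc i w * Zc i w) = (\<Sum>k\<in>I. 1 * expectation (\<lambda>w. Xc i w * ZK i k w))"
        unfolding Zc_def by (rule E_lin_mult[OF fin LZK LX])
      also have "\<dots> = (\<Sum>k\<in>I. \<Sum>a\<in>UNIV. F k $ i $ a * expectation (\<lambda>w. Xc i w * Vc k a w))"
        unfolding ZK_def using LV LX by (intro sum.cong refl) (simp add: E_lin_mult)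
      also have "\<dots> = (\<Sum>k\<in>I. \<Sum>a\<in>UNIV. F k $ i $ a * cov M x (v k) $ i $ a)"
        using v by (intro sum.cong refl) (simp add: cov_entry[OF x] Xc_def Vc_def)
      finally show ?thesis .
    qed
    have e3: "expectation (\<lambda>w. (Zc i w)\<^sup>2) =
        (\<Sum>k\<in>I. \<Sum>a\<in>UNIV. F k $ i $ a * (\<Sum>b\<in>UNIV. F k $ i $ b * cov M (v k) (v k) $ a $ b))"
    proof -
      have "expectation (\<lambda>w. (Zc i w)\<^sup>2) = expectation (\<lambda>w. Zc i w * Zc i w)"
        by (simp add: power2_eq_square)
      also have "\<dots> = (\<Sum>k\<in>I. 1 * (\<Sum>l\<in>I. 1 * expectation (\<lambda>w. ZK i k w * ZK i l w)))"
        unfolding Zc_def by (rule E_bilin[OF fin fin LZK LZK])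
      also have "\<dots> = (\<Sum>k\<in>I. \<Sum>l\<in>I. expectation (\<lambda>w. ZK i k w * ZK i l w))" by simp
      also have "\<dots> = (\<Sum>k\<in>I. \<Sum>l\<in>I. if l = k then
           (\<Sum>a\<in>UNIV. F k $ i $ a * (\<Sum>b\<in>UNIV. F k $ i $ b * cov M (v k) (v k) $ a $ b)) else 0)"
      proof (intro sum.cong refl)
        fix k l assume k: "k \<in> I" and l: "l \<in> I"
        have "expectation (\<lambda>w. ZK i k w * ZK i l w) =
            (\<Sum>a\<in>UNIV. F k $ i $ a * (\<Sum>b\<in>UNIV. F l $ i $ b * expectation (\<lambda>w. Vc k a w * Vc l b w)))"
          unfolding ZK_def by (rule E_bilin) (use LV k l in auto)
        also have "\<dots> = (\<Sum>a\<in>UNIV. F k $ i $ a * (\<Sum>b\<in>UNIV. F l $ i $ b * cov M (v k) (v l) $ a $ b))"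
          using v k l by (simp add: cov_entry Vc_def)
        finally show "expectation (\<lambda>w. ZK i k w * ZK i l w) = (if l = k then
           (\<Sum>a\<in>UNIV. F k $ i $ a * (\<Sum>b\<in>UNIV. F k $ i $ b * cov M (v k) (v k) $ a $ b)) else 0)"
          using orth[OF k l] by auto
      qed
      also have "\<dots> = (\<Sum>k\<in>I. \<Sum>a\<in>UNIV. F k $ i $ a * (\<Sum>b\<in>UNIV. F k $ i $ b * cov M (v k) (v k) $ a $ b))"
        using fin by simp
      finally show ?thesis .
    qed
    show ?thesis unfolding quad_expand[OF LX EX LZ EZ] e1 e2 e3 ..
  qed
  have "expectation (\<lambda>w. (norm (x w - f - (\<Sum>k\<in>I. F k *v v k w)))\<^sup>2) =
      expectation (\<lambda>w. \<Sum>i\<in>UNIV. (Xc i w - Zc i w + m $ i)\<^sup>2)"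
    unfolding power2_norm_eq_inner inner_vec_def decomp by (simp add: power2_eq_square)
  also have "\<dots> = (\<Sum>i\<in>UNIV. expectation (\<lambda>w. (Xc i w - Zc i w + m $ i)\<^sup>2))"
  proof (rule Bochner_Integration.integral_sum)
    fix i :: 'm
    have "L2s M (\<lambda>w. Xc i w - Zc i w + m $ i)" by (intro L2s_add L2s_diff LX LZ L2s_const)
    then show "integrable M (\<lambda>w. (Xc i w - Zc i w + m $ i)\<^sup>2)" unfolding L2s_def by simp
  qed
  also have "\<dots> = (\<Sum>i\<in>UNIV. cov M x x $ i $ i) - 2 * (\<Sum>i\<in>UNIV. \<Sum>k\<in>I. \<Sum>a\<in>UNIV. F k $ i $ a * cov M x (v k) $ i $ a)
      + (\<Sum>i\<in>UNIV. \<Sum>k\<in>I. \<Sum>a\<in>UNIV. F k $ i $ a * (\<Sum>b\<in>UNIV. F k $ i $ b * cov M (v k) (v k) $ a $ b))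
      + (\<Sum>i\<in>UNIV. (m $ i)\<^sup>2)"
    unfolding comp by (simp add: sum.distrib sum_subtractf sum_distrib_left)
  also have "(\<Sum>i\<in>UNIV. cov M x x $ i $ i) = trace (cov M x x)" by (simp add: trace_def)
  also have "(\<Sum>i\<in>UNIV. (m $ i)\<^sup>2) = (norm m)\<^sup>2"
    unfolding power2_norm_eq_inner inner_vec_def by (simp add: power2_eq_square)
  also have "(\<Sum>i\<in>UNIV. \<Sum>k\<in>I. \<Sum>a\<in>UNIV. F k $ i $ a * cov M x (v k) $ i $ a) = (\<Sum>k\<in>I. finner (F k) (cov M x (v k)))"
    unfolding finner_def by (rule sum.swap)
  also have "(\<Sum>i\<in>UNIV. \<Sum>k\<in>I. \<Sum>a\<in>UNIV. F k $ i $ a * (\<Sum>b\<in>UNIV. F k $ i $ b * cov M (v k) (v k) $ a $ b))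
      = (\<Sum>k\<in>I. finner (F k ** cov M (v k) (v k)) (F k))"
  proof -
    have "(\<Sum>i\<in>UNIV. \<Sum>k\<in>I. \<Sum>a\<in>UNIV. F k $ i $ a * (\<Sum>b\<in>UNIV. F k $ i $ b * cov M (v k) (v k) $ a $ b))
      = (\<Sum>k\<in>I. \<Sum>i\<in>UNIV. \<Sum>a\<in>UNIV. F k $ i $ a * (\<Sum>b\<in>UNIV. F k $ i $ b * cov M (v k) (v k) $ a $ b))"
      by (rule sum.swap)
    also have "\<dots> = (\<Sum>k\<in>I. finner (F k ** cov M (v k) (v k)) (F k))"
    proof (intro sum.cong refl)
      fix k
      have "(\<Sum>i\<in>UNIV. \<Sum>a\<in>UNIV. F k $ i $ a * (\<Sum>b\<in>UNIV. F k $ i $ b * cov M (v k) (v k) $ a $ b))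
          = (\<Sum>i\<in>UNIV. \<Sum>a\<in>UNIV. \<Sum>b\<in>UNIV. F k $ i $ a * cov M (v k) (v k) $ a $ b * F k $ i $ b)"
        by (simp add: sum_distrib_left mult_ac)
      also have "\<dots> = (\<Sum>i\<in>UNIV. \<Sum>b\<in>UNIV. \<Sum>a\<in>UNIV. F k $ i $ a * cov M (v k) (v k) $ a $ b * F k $ i $ b)"
        by (rule sum.cong[OF refl], rule sum.swap)
      also have "\<dots> = finner (F k ** cov M (v k) (v k)) (F k)"
        unfolding finner_def matrix_matrix_mult_def by (simp add: sum_distrib_right)
      finally show "(\<Sum>i\<in>UNIV. \<Sum>a\<in>UNIV. F k $ i $ a * (\<Sum>b\<in>UNIV. F k $ i $ b * cov M (v k) (v k) $ a $ b))
          = finner (F k ** cov M (v k) (v k)) (F k)" .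
    qed
    finally show ?thesis .
  qed
  finally show ?thesis unfolding m_def by (simp add: sum_subtractf sum_distrib_left algebra_simps)
qed


lemma lin_nonneg_zero:
  fixes a b :: real
  assumes "\<And>t. 0 \<le> b + 2 * t * a"
  shows "a = 0"
proof (rule ccontr)
  assume "a \<noteq> 0"
  have "0 \<le> b + 2 * (- (\<bar>b\<bar> + 1) / (2 * a)) * a" by (rule assms)
  also have "\<dots> = b - (\<bar>b\<bar> + 1)" using \<open>a \<noteq> 0\<close> by (simp add: field_simps)
  finally show False by linarith
qed

lemma cov_quad:
  assumes v: "L2_rv M v"
  shows "z \<bullet> (cov M v v *v z) = expectation (\<lambda>w. (\<Sum>a\<in>UNIV. z $ a * (v w $ a - mean M v $ a)) *
        (\<Sum>b\<in>UNIV. z $ b * (v w $ b - mean M v $ b)))"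
proof -
  have L: "L2s M (\<lambda>w. v w $ a - mean M v $ a)" for a unfolding mean_comp by (intro L2s_ctr L2s_comp v)
  show ?thesis
    unfolding E_bilin[OF finite_class.finite_UNIV finite_class.finite_UNIV L L] cov_entry[OF v v] inner_vec_def matrix_vector_mult_def
    by (simp add: mult_ac)
qed

lemma cov_psd: assumes v: "L2_rv M v" shows "psd (cov M v v)"
  unfolding psd_def
proof
  show "transpose (cov M v v) = cov M v v"
    by (simp add: vec_eq_iff transpose_def cov_def mult.commute)
  show "\<forall>z. 0 \<le> z \<bullet> (cov M v v *v z)"
    unfolding cov_quad[OF v] by (auto intro: integral_nonneg_AE)
qed

lemma cov_null:
  assumes x: "L2_rv M x" and v: "L2_rv M v" and z: "cov M v v *v z = 0"
  shows "cov M x v *v z = 0"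
proof -
  define W where "W w = (\<Sum>b\<in>UNIV. z $ b * (v w $ b - mean M v $ b))" for w
  have LV: "L2s M (\<lambda>w. v w $ a - mean M v $ a)" for a unfolding mean_comp by (intro L2s_ctr L2s_comp v)
  have LW: "L2s M W" unfolding W_def by (intro L2s_sum L2s_scale LV) simp
  have EW: "expectation W = 0" unfolding W_def E_lin[OF finite_class.finite_UNIV LV]
    using L2s_comp[OF v] by (simp add: mean_comp E_ctr)
  have EW2: "expectation (\<lambda>w. W w * W w) = 0"
    using cov_quad[OF v, of z] z unfolding W_def by simp
  show ?thesis
  proof (rule vec_eq_iff[THEN iffD2], intro allI)
    fix i
    define X where "X w = x w $ i - mean M x $ i" for w
    have LX: "L2s M X" unfolding X_def mean_comp by (intro L2s_ctr L2s_comp x)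
    have EX: "expectation X = 0" unfolding X_def mean_comp by (intro E_ctr L2s_comp x)
    have "(cov M x v *v z) $ i = (\<Sum>b\<in>UNIV. z $ b * expectation (\<lambda>w. X w * (v w $ b - mean M v $ b)))"
      unfolding X_def matrix_vector_mult_def cov_entry[OF x v] by (simp add: mult_ac)
    also have "\<dots> = expectation (\<lambda>w. X w * W w)"
      unfolding W_def by (rule E_lin_mult[OF finite_class.finite_UNIV LV LX, symmetric])
    finally have ci: "(cov M x v *v z) $ i = expectation (\<lambda>w. X w * W w)" .
    have "0 \<le> expectation (\<lambda>w. (X w)\<^sup>2) + 2 * t * expectation (\<lambda>w. X w * W w)" for t
    proof -
      have LZ: "L2s M (\<lambda>w. - t * W w)" by (rule L2s_scale[OF LW])
      have EZ: "expectation (\<lambda>w. - t * W w) = 0" using EW by simp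
      have "0 \<le> expectation (\<lambda>w. (X w - (- t * W w) + 0)\<^sup>2)" by (auto intro: integral_nonneg_AE)
      also have "\<dots> = expectation (\<lambda>w. (X w)\<^sup>2) - 2 * expectation (\<lambda>w. X w * (- t * W w))
          + expectation (\<lambda>w. (- t * W w)\<^sup>2) + 0\<^sup>2"
        by (rule quad_expand[OF LX EX LZ EZ])
      also have "expectation (\<lambda>w. X w * (- t * W w)) = - t * expectation (\<lambda>w. X w * W w)"
        by (simp add: mult_ac)
      also have "expectation (\<lambda>w. (- t * W w)\<^sup>2) = t\<^sup>2 * expectation (\<lambda>w. W w * W w)"
        by (simp add: power2_eq_square mult_ac)
      finally show ?thesis using EW2 by simp
    qed
    then have "expectation (\<lambda>w. X w * W w) = 0" by (rule lin_nonneg_zero)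
    then show "(cov M x v *v z) $ i = 0 $ i" using ci by simp
  qed
qed

end


lemma trace_frob: "transpose S = S \<Longrightarrow> trace (S ** S) = frob_sq (S :: real^'n^'n)"
proof -
  assume "transpose S = S"
  then have "trace (S ** S) = trace (S ** transpose S)" by simp
  also have "\<dots> = frob_sq S"
    unfolding trace_def frob_sq_def matrix_matrix_mult_def transpose_def by (simp add: power2_eq_square)
  finally show ?thesis .
qed

lemma outer_mult: "outer s d ** M = outer s (transpose M *v d)"
  by (simp add: vec_eq_iff outer_def matrix_matrix_mult_def transpose_def matrix_vector_mult_def
      sum_distrib_left mult_ac)

lemma mat_add_rdistrib: "(A + B) ** C = A ** C + B ** (C :: real^'p^'n)" for A B :: "real^'n^'m"
  by (simp add: vec_eq_iff matrix_matrix_mult_def sum.distrib distrib_right)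

lemma mat_diff_ldistrib: "A ** (B - C) = A ** B - A ** (C :: real^'p^'n)" for A :: "real^'n^'m"
  by (simp add: vec_eq_iff matrix_matrix_mult_def sum_subtractf right_diff_distrib)

lemma mat_diff_rdistrib: "(A - B) ** C = A ** C - B ** (C :: real^'p^'n)" for A B :: "real^'n^'m"
  by (simp add: vec_eq_iff matrix_matrix_mult_def sum_subtractf left_diff_distrib)

lemma mat_zero_mult: "(0 :: real^'n^'m) ** (C :: real^'p^'n) = 0"
  by (simp add: vec_eq_iff matrix_matrix_mult_def)

lemma sum_matmul: "(\<Sum>i\<in>I. f i) ** M = (\<Sum>i\<in>I. f i ** (M :: real^'p^'n))"
  for f :: "'i \<Rightarrow> real^'n^'m"
  by (induction I rule: infinite_finite_induct) (simp_all add: mat_add_rdistrib mat_zero_mult)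

lemma scaleR_matmul: "(c *\<^sub>R A) ** B = c *\<^sub>R (A ** (B :: real^'p^'n))" for A :: "real^'n^'m"
  by (simp add: vec_eq_iff matrix_matrix_mult_def sum_distrib_left mult_ac)

lemma per_k:
  fixes Evv :: "real^'n^'n" and Exv :: "real^'n^'m" and s :: "nat \<Rightarrow> real^'m" and d :: "nat \<Rightarrow> real^'n"
    and A G F0 :: "real^'n^'m"
  assumes psd: "psd Evv"
    and null: "\<And>z. Evv *v z = 0 \<Longrightarrow> Exv *v z = 0"
    and svd: "Exv ** pinv (sqrtm Evv) = (\<Sum>j\<in>{1..r}. \<beta> j *\<^sub>R outer (s j) (d j))"
    and so: "orthonormal_on {1..r} s" and dor: "orthonormal_on {1..r} d"
    and mono: "\<And>j. 1 \<le> j \<Longrightarrow> j < r \<Longrightarrow> \<beta> (Suc j) \<le> \<beta> j"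
    and pos: "\<And>j. j \<in> {1..r} \<Longrightarrow> 0 < \<beta> j"
    and bz: "\<And>j. r < j \<Longrightarrow> \<beta> j = 0"
    and G: "G = (\<Sum>j\<in>{1..eta}. \<beta> j *\<^sub>R outer (s j) (d j))"
    and F0: "F0 = G ** pinv (sqrtm Evv) + A ** (mat 1 - sqrtm Evv ** pinv (sqrtm Evv))"
  shows "\<And>F. rank F \<le> eta \<Longrightarrow> - (\<Sum>j\<in>{1..eta}. (\<beta> j)\<^sup>2) \<le> finner (F ** Evv) F - 2 * finner F Exv"
    and "finner (F0 ** Evv) F0 - 2 * finner F0 Exv = - (\<Sum>j\<in>{1..eta}. (\<beta> j)\<^sup>2)"
proof -
  define R where "R = sqrtm Evv"
  define P where "P = pinv R"
  define K where "K = (\<Sum>j\<in>{1..r}. \<beta> j *\<^sub>R outer (s j) (d j))"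
  have psdR: "psd R" and RR: "R ** R = Evv" using sqrtm[OF psd] unfolding R_def by auto
  have symR: "transpose R = R" using psdR by (rule psd_sym)
  have pinvP: "is_pinv R P" and symP: "transpose P = P" and RPc: "R ** P = P ** R"
    using pinv_sym[OF symR] unfolding P_def by auto
  have RPR: "R ** P ** R = R" and PRP: "P ** R ** P = P" and symRP: "transpose (R ** P) = R ** P"
    using pinvP unfolding is_pinv_def by auto
  have KP: "Exv ** P = K" using svd unfolding K_def P_def R_def .
  have ExvKR: "K ** R = Exv"
  proof -
    have "Exv *v z = (Exv ** P ** R) *v z" for z
    proof -
      define y where "y = z - (P ** R) *v z"
      have "R *v y = 0" unfolding y_def
        by (simp add: matrix_vector_mult_diff_distrib matrix_vector_mul_assoc matrix_mul_assoc RPR)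
      then have "Evv *v y = 0" unfolding RR[symmetric] by (simp add: matrix_vector_mul_assoc[symmetric])
      then have "Exv *v y = 0" by (rule null)
      then show ?thesis unfolding y_def
        by (simp add: matrix_vector_mult_diff_distrib matrix_vector_mul_assoc matrix_mul_assoc)
    qed
    then have "Exv ** P ** R = Exv" by (simp add: matrix_eq)
    then show ?thesis using KP by simp
  qed
  have Q: "finner (F ** Evv) F - 2 * finner F Exv = frob_sq (F ** R - K) - frob_sq K" for F :: "real^'n^'m"
  proof -
    have "finner (F ** Evv) F = frob_sq (F ** R)"
      unfolding RR[symmetric] frob_sq_finner matrix_mul_assoc finner_mult symR ..
    moreover have "finner F Exv = finner (F ** R) K"
      unfolding ExvKR[symmetric] finner_comm[of F] finner_mult symR by simp
    ultimately show ?thesis unfolding frob_sq_diff by simp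
  qed
  have fK: "frob_sq K = (\<Sum>j\<in>{1..r}. (\<beta> j)\<^sup>2)"
    unfolding K_def by (rule frob_sq_svd[OF so dor]) simp
  show "- (\<Sum>j\<in>{1..eta}. (\<beta> j)\<^sup>2) \<le> finner (F ** Evv) F - 2 * finner F Exv" if "rank F \<le> eta" for F
  proof -
    have "rank (F ** R) \<le> eta" using rank_mul_le_left[of F R] that by simp
    from eckart_young[OF K_def so dor mono pos bz this] show ?thesis unfolding Q by simp
  qed
  have KRP: "K ** (R ** P) = K" using KP PRP by (metis matrix_mul_assoc)
  have KTs: "transpose K *v s j = \<beta> j *\<^sub>R d j" if j: "j \<in> {1..r}" for j
  proof -
    have "transpose K *v s j = (\<Sum>l\<in>{1..r}. (\<beta> l * (s l \<bullet> s j)) *\<^sub>R d l)"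
      unfolding K_def transpose_sum transpose_scaleR transpose_outer sum_mulv scaleR_mulv outer_mulv
      by simp
    also have "\<dots> = (\<Sum>l\<in>{1..r}. if l = j then \<beta> j *\<^sub>R d j else 0)"
      using so j unfolding orthonormal_on_def by (intro sum.cong refl) auto
    also have "\<dots> = \<beta> j *\<^sub>R d j" using j by simp
    finally show ?thesis .
  qed
  have RPd: "(R ** P) *v d j = d j" if j: "j \<in> {1..r}" for j
  proof -
    have "transpose (K ** (R ** P)) = transpose (R ** P) ** transpose K" by (rule matrix_transpose_mul)
    then have "transpose K = (R ** P) ** transpose K" unfolding KRP symRP .
    then have "transpose K *v s j = (R ** P) *v (transpose K *v s j)"
      by (metis matrix_vector_mul_assoc)
    then have "\<beta> j *\<^sub>R d j = \<beta> j *\<^sub>R ((R ** P) *v d j)"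
      unfolding KTs[OF j] by (simp add: matrix_vector_mult_scaleR)
    then show ?thesis using pos[OF j] by simp
  qed
  have GPR: "G ** (P ** R) = G"
  proof -
    have "G ** (P ** R) = (\<Sum>j\<in>{1..eta}. \<beta> j *\<^sub>R outer (s j) ((R ** P) *v d j))"
      unfolding G sum_matmul scaleR_matmul outer_mult matrix_transpose_mul symR symP RPc ..
    also have "\<dots> = G" unfolding G
    proof (intro sum.cong refl)
      fix j assume "j \<in> {1..eta}"
      show "\<beta> j *\<^sub>R outer (s j) ((R ** P) *v d j) = \<beta> j *\<^sub>R outer (s j) (d j)"
      proof (cases "j \<le> r")
        case True
        then show ?thesis using RPd \<open>j \<in> {1..eta}\<close> by simp
      next
        case False then show ?thesis using bz by simp
      qed
    qed
    finally show ?thesis .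
  qed
  have F0R: "F0 ** R = G"
  proof -
    have "F0 ** R = G ** (P ** R) + A ** (R - R ** P ** R)"
      unfolding F0 R_def[symmetric] P_def[symmetric]
      by (simp add: mat_add_rdistrib mat_diff_ldistrib matrix_mul_assoc[symmetric] mat_diff_rdistrib)
    then show ?thesis using GPR RPR by simp
  qed
  define B where "B = {1..min eta r}"
  have Bsub: "B \<subseteq> {1..r}" unfolding B_def by auto
  have GB: "G = (\<Sum>j\<in>B. \<beta> j *\<^sub>R outer (s j) (d j))"
    unfolding G B_def using bz by (intro sum.mono_neutral_right) auto
  have bB: "(\<Sum>j\<in>{1..eta}. (\<beta> j)\<^sup>2) = (\<Sum>j\<in>B. (\<beta> j)\<^sup>2)"
    unfolding B_def using bz by (intro sum.mono_neutral_right) auto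
  have KG: "K - G = (\<Sum>j\<in>{1..r} - B. \<beta> j *\<^sub>R outer (s j) (d j))"
    unfolding K_def GB using sum.subset_diff[OF Bsub, of "\<lambda>j. \<beta> j *\<^sub>R outer (s j) (d j)"] by simp
  have "frob_sq (G - K) = frob_sq (K - G)" using frob_sq_uminus[of "K - G"] by simp
  also have "\<dots> = (\<Sum>j\<in>{1..r} - B. (\<beta> j)\<^sup>2)"
    unfolding KG by (rule frob_sq_svd) (auto intro: orthonormal_on_subset[OF so] orthonormal_on_subset[OF dor])
  also have "\<dots> = frob_sq K - (\<Sum>j\<in>{1..eta}. (\<beta> j)\<^sup>2)"
    unfolding fK bB using sum.subset_diff[OF Bsub, of "\<lambda>j. (\<beta> j)\<^sup>2"] by simp
  finally show "finner (F0 ** Evv) F0 - 2 * finner F0 Exv = - (\<Sum>j\<in>{1..eta}. (\<beta> j)\<^sup>2)"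
    unfolding Q F0R by simp
qed

theorem theorem2:
  fixes M :: "'w measure"
    and x :: "'w \<Rightarrow> real^'m"
    and v :: "nat \<Rightarrow> 'w \<Rightarrow> real^'n"
    and p :: nat
    and \<eta> :: "nat \<Rightarrow> nat"
    and r :: "nat \<Rightarrow> nat"
    and \<beta> :: "nat \<Rightarrow> nat \<Rightarrow> real"
    and s :: "nat \<Rightarrow> nat \<Rightarrow> real^'m"
    and d :: "nat \<Rightarrow> nat \<Rightarrow> real^'n"
    and A :: "nat \<Rightarrow> real^'n^'m"
    and G :: "nat \<Rightarrow> real^'n^'m"
    and F0 :: "nat \<Rightarrow> real^'n^'m"
    and f0 :: "real^'m"
  assumes prob: "prob_space M"
    and x_L2: "L2_rv M x"
    and v_L2: "\<And>k. k \<in> {1..p} \<Longrightarrow> L2_rv M (v k)"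
    and orth: "\<And>i j. i \<in> {1..p} \<Longrightarrow> j \<in> {1..p} \<Longrightarrow> i \<noteq> j \<Longrightarrow> cov M (v i) (v j) = 0"
    and eta_sum: "(\<Sum>k\<in>{1..p}. \<eta> k) \<le> min CARD('m) CARD('n)"
    and svd: "\<And>k. k \<in> {1..p} \<Longrightarrow>
       cov M x (v k) ** pinv (sqrtm (cov M (v k) (v k))) =
         (\<Sum>j\<in>{1..r k}. \<beta> k j *\<^sub>R outer (s k j) (d k j))"
    and s_orthonormal: "\<And>k j j'. k \<in> {1..p} \<Longrightarrow> j \<in> {1..r k} \<Longrightarrow> j' \<in> {1..r k} \<Longrightarrow>
       s k j \<bullet> s k j' = (if j = j' then 1 else 0)"
    and d_orthonormal: "\<And>k j j'. k \<in> {1..p} \<Longrightarrow> j \<in> {1..r k} \<Longrightarrow> j' \<in> {1..r k} \<Longrightarrow>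
       d k j \<bullet> d k j' = (if j = j' then 1 else 0)"
    and beta_mono: "\<And>k j. k \<in> {1..p} \<Longrightarrow> 1 \<le> j \<Longrightarrow> j < r k \<Longrightarrow> \<beta> k (Suc j) \<le> \<beta> k j"
    and beta_pos: "\<And>k j. k \<in> {1..p} \<Longrightarrow> j \<in> {1..r k} \<Longrightarrow> 0 < \<beta> k j"
    and beta_zero: "\<And>k j. k \<in> {1..p} \<Longrightarrow> r k < j \<Longrightarrow> \<beta> k j = 0"
    and G_def: "\<And>k. G k = (\<Sum>j\<in>{1..\<eta> k}. \<beta> k j *\<^sub>R outer (s k j) (d k j))"
    and F0_def: "\<And>k. F0 k = G k ** pinv (sqrtm (cov M (v k) (v k))) +
       A k ** (mat 1 - sqrtm (cov M (v k) (v k)) ** pinv (sqrtm (cov M (v k) (v k))))"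
    and A_rank: "\<And>k. k \<in> {1..p} \<Longrightarrow> rank (F0 k) \<le> \<eta> k"
    and f0_def: "f0 = mean M x - (\<Sum>k\<in>{1..p}. F0 k *v mean M (v k))"
  shows "(\<forall>(f::real^'m) (F::nat \<Rightarrow> real^'n^'m). (\<forall>k\<in>{1..p}. rank (F k) \<le> \<eta> k) \<longrightarrow>
            integral\<^sup>L M (\<lambda>w. (norm (x w - f0 - (\<Sum>k\<in>{1..p}. F0 k *v v k w)))\<^sup>2)
            \<le> integral\<^sup>L M (\<lambda>w. (norm (x w - f - (\<Sum>k\<in>{1..p}. F k *v v k w)))\<^sup>2))
       \<and> integral\<^sup>L M (\<lambda>w. (norm (x w - f0 - (\<Sum>k\<in>{1..p}. F0 k *v v k w)))\<^sup>2)
         = frob_sq (sqrtm (cov M x x)) - (\<Sum>k\<in>{1..p}. \<Sum>j\<in>{1..\<eta> k}. (\<beta> k j)\<^sup>2)"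
proof -
  interpret prob_space M by (rule prob)
  define Q where "Q F k = finner (F ** cov M (v k) (v k)) F - 2 * finner F (cov M x (v k))"
    for F :: "real^'n^'m" and k
  define S where "S k = (\<Sum>j\<in>{1..\<eta> k}. (\<beta> k j)\<^sup>2)" for k
  have Jexp: "integral\<^sup>L M (\<lambda>w. (norm (x w - f - (\<Sum>k\<in>{1..p}. F k *v v k w)))\<^sup>2) =
      (norm (mean M x - f - (\<Sum>k\<in>{1..p}. F k *v mean M (v k))))\<^sup>2 + trace (cov M x x)
      + (\<Sum>k\<in>{1..p}. Q (F k) k)" for f F
    unfolding Q_def by (rule J_expand[OF x_L2 v_L2 _ orth]) auto
  have pk: "(\<forall>F. rank F \<le> \<eta> k \<longrightarrow> - S k \<le> Q F k) \<and> Q (F0 k) k = - S k" if k: "k \<in> {1..p}" for k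
  proof -
    have so: "orthonormal_on {1..r k} (s k)" unfolding orthonormal_on_def using s_orthonormal[OF k] by auto
    have dor: "orthonormal_on {1..r k} (d k)" unfolding orthonormal_on_def using d_orthonormal[OF k] by auto
    note P = per_k[OF cov_psd[OF v_L2[OF k]] cov_null[OF x_L2 v_L2[OF k]] svd[OF k] so dor
        beta_mono[OF k] beta_pos[OF k] beta_zero[OF k] G_def F0_def]
    show ?thesis unfolding Q_def S_def using P by auto
  qed
  have tr: "trace (cov M x x) = frob_sq (sqrtm (cov M x x))"
  proof -
    have "psd (sqrtm (cov M x x))" "sqrtm (cov M x x) ** sqrtm (cov M x x) = cov M x x"
      using sqrtm[OF cov_psd[OF x_L2]] by auto
    then show ?thesis using trace_frob[OF psd_sym] by metis
  qed
  have m0: "mean M x - f0 - (\<Sum>k\<in>{1..p}. F0 k *v mean M (v k)) = 0" unfolding f0_def by simp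
  have val: "integral\<^sup>L M (\<lambda>w. (norm (x w - f0 - (\<Sum>k\<in>{1..p}. F0 k *v v k w)))\<^sup>2)
      = frob_sq (sqrtm (cov M x x)) - (\<Sum>k\<in>{1..p}. S k)"
    unfolding Jexp m0 tr using pk by (simp add: sum_negf)
  show ?thesis
  proof
    show "\<forall>(f::real^'m) (F::nat \<Rightarrow> real^'n^'m). (\<forall>k\<in>{1..p}. rank (F k) \<le> \<eta> k) \<longrightarrow>
            integral\<^sup>L M (\<lambda>w. (norm (x w - f0 - (\<Sum>k\<in>{1..p}. F0 k *v v k w)))\<^sup>2)
            \<le> integral\<^sup>L M (\<lambda>w. (norm (x w - f - (\<Sum>k\<in>{1..p}. F k *v v k w)))\<^sup>2)"
    proof (intro allI impI)
      fix f :: "real^'m" and F :: "nat \<Rightarrow> real^'n^'m"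
      assume rk: "\<forall>k\<in>{1..p}. rank (F k) \<le> \<eta> k"
      have "(\<Sum>k\<in>{1..p}. - S k) \<le> (\<Sum>k\<in>{1..p}. Q (F k) k)"
        using pk rk by (intro sum_mono) auto
      then show "integral\<^sup>L M (\<lambda>w. (norm (x w - f0 - (\<Sum>k\<in>{1..p}. F0 k *v v k w)))\<^sup>2)
            \<le> integral\<^sup>L M (\<lambda>w. (norm (x w - f - (\<Sum>k\<in>{1..p}. F k *v v k w)))\<^sup>2)"
        unfolding val Jexp[of f F] tr[symmetric]
        using zero_le_power2[of "norm (mean M x - f - (\<Sum>k\<in>{1..p}. F k *v mean M (v k)))"]
          sum_negf[of S "{1..p}"] by linarith
    qed
    show "integral\<^sup>L M (\<lambda>w. (norm (x w - f0 - (\<Sum>k\<in>{1..p}. F0 k *v v k w)))\<^sup>2)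
         = frob_sq (sqrtm (cov M x x)) - (\<Sum>k\<in>{1..p}. \<Sum>j\<in>{1..\<eta> k}. (\<beta> k j)\<^sup>2)"
      unfolding val S_def ..
  qed
qed

end
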